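(* Let $1\to K\to G\to Q\to1$ be a short exact sequence of groups. If $K$ and $Q$ are both n-slender, then $G$ is n-slender; if $K$ and $Q$ are both cm-slender, then $G$ is cm-slender; if $K$ and $Q$ are both lcH-slender, then $G$ is lcH-slender.
   Context: Let $E=\bigcup_{n\in\mathbb{N}}C((0,\tfrac1n),\tfrac1n)\subseteq\mathbb{R}^2$ be the Hawaiian earring ($C(q,r)$ the circle of center $q$, radius $r$), and $\mathbb{H}=\pi_1(E,(0,0))$. For $N\in\mathbb{N}$ let $p_N:\mathbb{H}\to\mathbb{H}$ be induced by the retraction of $E$ onto the union of the first $N$ circles collapsing the other circles to the base point. A group $G$ is n-slender if for every homomorphism $\phi:\mathbb{H}\to G$ there is $N$ with $\phi=\phi\circ p_N$. A group is cm-slender if every homomorphism to it from a completely metrizable topological group has open kernel, and lcH-slender if every homomorphism to it from a locally compact Hausdorff topological group has open kernel. *)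

theory Defs
  imports "HOL-Analysis.Analysis" "HOL-Algebra.Coset"
begin

text \<open>The plane is modelled as the complex numbers; the n-th circle (n >= 1)
  has centre (0, 1/n) = i/n and radius 1/n.\<close>

definition HE_circle :: "nat \<Rightarrow> complex set" where
  "HE_circle n = sphere (\<i> * complex_of_real (1 / real n)) (1 / real n)"

definition HE :: "complex set" where
  "HE = (\<Union>n\<in>{1..}. HE_circle n)"

definition HE_loop :: "(real \<Rightarrow> complex) \<Rightarrow> bool" where
  "HE_loop g \<longleftrightarrow> path g \<and> path_image g \<subseteq> HE \<and> pathstart g = 0 \<and> pathfinish g = 0"

definition HE_class :: "(real \<Rightarrow> complex) \<Rightarrow> (real \<Rightarrow> complex) set" where
  "HE_class g = {h. HE_loop h \<and> homotopic_paths HE g h}"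

definition HE_group :: "(real \<Rightarrow> complex) set monoid" where
  "HE_group = \<lparr> carrier = HE_class ` {g. HE_loop g},
                mult = (\<lambda>A B. HE_class ((SOME a. a \<in> A) +++ (SOME b. b \<in> B))),
                one = HE_class (\<lambda>_. 0) \<rparr>"

definition HE_retract :: "nat \<Rightarrow> complex \<Rightarrow> complex" where
  "HE_retract N z = (if z \<in> (\<Union>n\<in>{1..N}. HE_circle n) then z else 0)"

definition HE_proj :: "nat \<Rightarrow> (real \<Rightarrow> complex) set \<Rightarrow> (real \<Rightarrow> complex) set" where
  "HE_proj N A = HE_class (HE_retract N \<circ> (SOME a. a \<in> A))"

definition n_slender :: "('g, 'c) monoid_scheme \<Rightarrow> bool" where
  "n_slender G \<longleftrightarrow>
     (\<forall>\<phi> \<in> hom HE_group G. \<exists>N. \<forall>x \<in> carrier HE_group. \<phi> x = \<phi> (HE_proj N x))"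

definition topological_group :: "'h monoid \<Rightarrow> 'h topology \<Rightarrow> bool" where
  "topological_group H T \<longleftrightarrow> group H \<and> topspace T = carrier H \<and>
     continuous_map (prod_topology T T) T (\<lambda>(x, y). x \<otimes>\<^bsub>H\<^esub> y) \<and>
     continuous_map T T (\<lambda>x. inv\<^bsub>H\<^esub> x)"

text \<open>Slenderness with respect to source groups whose carriers live in the
  type 'h (the theorem below is stated for an arbitrary type 'h).\<close>
definition cm_slender :: "'h itself \<Rightarrow> ('g, 'c) monoid_scheme \<Rightarrow> bool" where
  "cm_slender _ G \<longleftrightarrow>
     (\<forall>(H :: 'h monoid) T \<phi>. topological_group H T \<and> completely_metrizable_space T \<and>
        \<phi> \<in> hom H G \<longrightarrow> openin T (kernel H G \<phi>))"

definition lcH_slender :: "'h itself \<Rightarrow> ('g, 'c) monoid_scheme \<Rightarrow> bool" where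
  "lcH_slender _ G \<longleftrightarrow>
     (\<forall>(H :: 'h monoid) T \<phi>. topological_group H T \<and> locally_compact_space T \<and>
        Hausdorff_space T \<and> \<phi> \<in> hom H G \<longrightarrow> openin T (kernel H G \<phi>))"

definition short_exact ::
  "('k, 'a) monoid_scheme \<Rightarrow> ('g, 'b) monoid_scheme \<Rightarrow> ('q, 'c) monoid_scheme \<Rightarrow>
   ('k \<Rightarrow> 'g) \<Rightarrow> ('g \<Rightarrow> 'q) \<Rightarrow> bool" where
  "short_exact K G Q i f \<longleftrightarrow> group K \<and> group G \<and> group Q \<and>
     i \<in> hom K G \<and> inj_on i (carrier K) \<and>
     f \<in> hom G Q \<and> f ` carrier G = carrier Q \<and>
     i ` carrier K = kernel G Q f"

end

theory Submission
  imports Defs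
begin


lemma exact_lift:
  assumes se: "short_exact K G Q i f"
    and phi: "\<phi> \<in> hom H G"
    and ker: "\<And>x. x \<in> carrier H \<Longrightarrow> f (\<phi> x) = \<one>\<^bsub>Q\<^esub>"
  shows "(\<lambda>x. inv_into (carrier K) i (\<phi> x)) \<in> hom H K"
    and "\<And>x. x \<in> carrier H \<Longrightarrow> i (inv_into (carrier K) i (\<phi> x)) = \<phi> x"
    and "\<And>x. x \<in> carrier H \<Longrightarrow> inv_into (carrier K) i (\<phi> x) = \<one>\<^bsub>K\<^esub> \<longleftrightarrow> \<phi> x = \<one>\<^bsub>G\<^esub>"
proof -
  from se have gK: "group K" and gG: "group G" and gQ: "group Q"
    and iK: "i \<in> hom K G" and inj: "inj_on i (carrier K)" and fh: "f \<in> hom G Q"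
    and im: "i ` carrier K = kernel G Q f"
    unfolding short_exact_def by auto
  have inIm: "\<phi> x \<in> i ` carrier K" if "x \<in> carrier H" for x
    using that ker phi im unfolding kernel_def hom_def by auto
  show eq: "i (inv_into (carrier K) i (\<phi> x)) = \<phi> x" if "x \<in> carrier H" for x
    using inIm[OF that] by (simp add: f_inv_into_f)
  have mem: "inv_into (carrier K) i (\<phi> x) \<in> carrier K" if "x \<in> carrier H" for x
    using inIm[OF that] by (simp add: inv_into_into)
  show "(\<lambda>x. inv_into (carrier K) i (\<phi> x)) \<in> hom H K"
  proof (rule homI)
    fix x assume "x \<in> carrier H" then show "inv_into (carrier K) i (\<phi> x) \<in> carrier K" by (rule mem)
  next
    fix x y assume x: "x \<in> carrier H" and y: "y \<in> carrier H"
    have pxy: "\<phi> (x \<otimes>\<^bsub>H\<^esub> y) = \<phi> x \<otimes>\<^bsub>G\<^esub> \<phi> y" using phi x y unfolding hom_def by auto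
    let ?a = "inv_into (carrier K) i (\<phi> x)" and ?b = "inv_into (carrier K) i (\<phi> y)"
    have ab: "?a \<otimes>\<^bsub>K\<^esub> ?b \<in> carrier K" using mem[OF x] mem[OF y] gK by (simp add: group.is_monoid monoid.m_closed)
    have "i (?a \<otimes>\<^bsub>K\<^esub> ?b) = \<phi> x \<otimes>\<^bsub>G\<^esub> \<phi> y"
      using iK mem[OF x] mem[OF y] eq[OF x] eq[OF y] unfolding hom_def by auto
    hence "\<phi> (x \<otimes>\<^bsub>H\<^esub> y) = i (?a \<otimes>\<^bsub>K\<^esub> ?b)" using pxy by simp
    then show "inv_into (carrier K) i (\<phi> (x \<otimes>\<^bsub>H\<^esub> y)) = ?a \<otimes>\<^bsub>K\<^esub> ?b"
      using inv_into_f_f[OF inj ab] by simp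
  qed
  show "inv_into (carrier K) i (\<phi> x) = \<one>\<^bsub>K\<^esub> \<longleftrightarrow> \<phi> x = \<one>\<^bsub>G\<^esub>" if x: "x \<in> carrier H" for x
  proof -
    have i1: "i \<one>\<^bsub>K\<^esub> = \<one>\<^bsub>G\<^esub>" using iK gK gG by (simp add: group_hom.hom_one group_hom_axioms_def group_hom_def)
    have o: "\<one>\<^bsub>K\<^esub> \<in> carrier K" using gK by (simp add: group.is_monoid monoid.one_closed)
    show ?thesis
    proof
      assume "inv_into (carrier K) i (\<phi> x) = \<one>\<^bsub>K\<^esub>" then show "\<phi> x = \<one>\<^bsub>G\<^esub>" using eq[OF x] i1 by metis
    next
      assume "\<phi> x = \<one>\<^bsub>G\<^esub>" then show "inv_into (carrier K) i (\<phi> x) = \<one>\<^bsub>K\<^esub>"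
        using inv_into_f_f[OF inj o] i1 by simp
    qed
  qed
qed

lemma topgroup_restrict:
  assumes tg: "topological_group H T" and sg: "subgroup U H" and Uo: "openin T U"
  shows "topological_group (H\<lparr>carrier := U\<rparr>) (subtopology T U)"
proof -
  from tg have gH: "group H" and ts: "topspace T = carrier H"
    and cm: "continuous_map (prod_topology T T) T (\<lambda>(x, y). x \<otimes>\<^bsub>H\<^esub> y)"
    and ci: "continuous_map T T (\<lambda>x. inv\<^bsub>H\<^esub> x)"
    unfolding topological_group_def by auto
  have Usub: "U \<subseteq> carrier H" using sg by (simp add: subgroup.subset)
  have g': "group (H\<lparr>carrier := U\<rparr>)" using sg gH by (rule subgroup.subgroup_is_group)
  have ts': "topspace (subtopology T U) = U" using ts Usub by auto
  have "continuous_map (prod_topology (subtopology T U) (subtopology T U)) (subtopology T U) (\<lambda>(x, y). x \<otimes>\<^bsub>H\<^esub> y)"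
    unfolding subtopology_Times[symmetric] continuous_map_in_subtopology
    using continuous_map_from_subtopology[OF cm] ts' sg
    by (auto simp: subgroup.m_closed)
  moreover have "continuous_map (subtopology T U) (subtopology T U) (\<lambda>x. inv\<^bsub>H\<lparr>carrier := U\<rparr>\<^esub> x)"
  proof (rule continuous_map_eq)
    show "continuous_map (subtopology T U) (subtopology T U) (\<lambda>x. inv\<^bsub>H\<^esub> x)"
      unfolding continuous_map_in_subtopology
      using continuous_map_from_subtopology[OF ci] ts' sg
      by (auto simp: subgroup.m_inv_closed)
    show "inv\<^bsub>H\<^esub> x = inv\<^bsub>H\<lparr>carrier := U\<rparr>\<^esub> x" if "x \<in> topspace (subtopology T U)" for x
      using that ts' sg gH by (simp add: group.m_inv_consistent)
  qed
  ultimately show ?thesis unfolding topological_group_def using g' ts' by simp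
qed

lemma ext_core:
  assumes se: "short_exact K G Q i f"
    and tg: "topological_group H T" and phi: "\<phi> \<in> hom H G"
    and Uo: "openin T (kernel H Q (\<lambda>x. f (\<phi> x)))"
    and Kprop: "\<And>\<psi>. \<psi> \<in> hom (H\<lparr>carrier := kernel H Q (\<lambda>x. f (\<phi> x))\<rparr>) K \<Longrightarrow>
        openin (subtopology T (kernel H Q (\<lambda>x. f (\<phi> x)))) (kernel (H\<lparr>carrier := kernel H Q (\<lambda>x. f (\<phi> x))\<rparr>) K \<psi>)"
  shows "openin T (kernel H G \<phi>)"
proof -
  let ?U = "kernel H Q (\<lambda>x. f (\<phi> x))"
  let ?H = "H\<lparr>carrier := ?U\<rparr>"
  from se have gK: "group K" and gG: "group G" and gQ: "group Q"
    and fh: "f \<in> hom G Q" unfolding short_exact_def by auto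
  have phi': "\<phi> \<in> hom ?H G" using phi unfolding hom_def kernel_def by auto
  have kk: "\<And>x. x \<in> carrier ?H \<Longrightarrow> f (\<phi> x) = \<one>\<^bsub>Q\<^esub>" unfolding kernel_def by auto
  note L = exact_lift[OF se phi' kk]
  have f1: "f \<one>\<^bsub>G\<^esub> = \<one>\<^bsub>Q\<^esub>" using fh gG gQ by (simp add: group_hom.hom_one group_hom_axioms_def group_hom_def)
  have "kernel ?H K (\<lambda>x. inv_into (carrier K) i (\<phi> x)) = kernel H G \<phi>"
  proof -
    have "x \<in> carrier H \<and> f (\<phi> x) = \<one>\<^bsub>Q\<^esub> \<and> inv_into (carrier K) i (\<phi> x) = \<one>\<^bsub>K\<^esub> \<longleftrightarrow> x \<in> carrier H \<and> \<phi> x = \<one>\<^bsub>G\<^esub>" for x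
      using L(3)[of x] f1 unfolding kernel_def by auto
    then show ?thesis unfolding kernel_def by auto
  qed
  then have "openin (subtopology T ?U) (kernel H G \<phi>)" using Kprop[OF L(1)] by simp
  then show ?thesis using Uo by (rule openin_trans_full)
qed

lemma hom_comp': "\<phi> \<in> hom H G \<Longrightarrow> f \<in> hom G Q \<Longrightarrow> (\<lambda>x. f (\<phi> x)) \<in> hom H Q"
  unfolding hom_def by (auto simp: Pi_iff)

lemma cm_part:
  assumes se: "short_exact K G Q i f"
    and sK: "cm_slender TYPE('h) K" and sQ: "cm_slender TYPE('h) Q"
  shows "cm_slender TYPE('h) G"
  unfolding cm_slender_def
proof (intro allI impI, elim conjE)
  fix H :: "'h monoid" and T \<phi>
  assume tg: "topological_group H T" and cms: "completely_metrizable_space T" and phi: "\<phi> \<in> hom H G"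
  from se have gQ: "group Q" and fh: "f \<in> hom G Q" unfolding short_exact_def by auto
  have gH: "group H" using tg unfolding topological_group_def by auto
  have fphi: "(\<lambda>x. f (\<phi> x)) \<in> hom H Q" using hom_comp'[OF phi fh] .
  have Uo: "openin T (kernel H Q (\<lambda>x. f (\<phi> x)))" using sQ tg cms fphi unfolding cm_slender_def by blast
  have sg: "subgroup (kernel H Q (\<lambda>x. f (\<phi> x))) H"
    using fphi gH gQ by (simp add: group_hom.subgroup_kernel group_hom_axioms_def group_hom_def)
  show "openin T (kernel H G \<phi>)"
  proof (rule ext_core[OF se tg phi Uo])
    fix \<psi> assume "\<psi> \<in> hom (H\<lparr>carrier := kernel H Q (\<lambda>x. f (\<phi> x))\<rparr>) K"
    moreover have "topological_group (H\<lparr>carrier := kernel H Q (\<lambda>x. f (\<phi> x))\<rparr>) (subtopology T (kernel H Q (\<lambda>x. f (\<phi> x))))"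
      using topgroup_restrict[OF tg sg Uo] .
    moreover have "completely_metrizable_space (subtopology T (kernel H Q (\<lambda>x. f (\<phi> x))))"
      using cms Uo by (rule completely_metrizable_space_openin)
    ultimately show "openin (subtopology T (kernel H Q (\<lambda>x. f (\<phi> x)))) (kernel (H\<lparr>carrier := kernel H Q (\<lambda>x. f (\<phi> x))\<rparr>) K \<psi>)"
      using sK unfolding cm_slender_def by blast
  qed
qed

lemma lcH_part:
  assumes se: "short_exact K G Q i f"
    and sK: "lcH_slender TYPE('h) K" and sQ: "lcH_slender TYPE('h) Q"
  shows "lcH_slender TYPE('h) G"
  unfolding lcH_slender_def
proof (intro allI impI, elim conjE)
  fix H :: "'h monoid" and T \<phi>
  assume tg: "topological_group H T" and lc: "locally_compact_space T" and hd: "Hausdorff_space T" and phi: "\<phi> \<in> hom H G"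
  from se have gQ: "group Q" and fh: "f \<in> hom G Q" unfolding short_exact_def by auto
  have gH: "group H" using tg unfolding topological_group_def by auto
  have fphi: "(\<lambda>x. f (\<phi> x)) \<in> hom H Q" using hom_comp'[OF phi fh] .
  have Uo: "openin T (kernel H Q (\<lambda>x. f (\<phi> x)))" using sQ tg lc hd fphi unfolding lcH_slender_def by blast
  have sg: "subgroup (kernel H Q (\<lambda>x. f (\<phi> x))) H"
    using fphi gH gQ by (simp add: group_hom.subgroup_kernel group_hom_axioms_def group_hom_def)
  show "openin T (kernel H G \<phi>)"
  proof (rule ext_core[OF se tg phi Uo])
    fix \<psi> assume "\<psi> \<in> hom (H\<lparr>carrier := kernel H Q (\<lambda>x. f (\<phi> x))\<rparr>) K"
    moreover have "topological_group (H\<lparr>carrier := kernel H Q (\<lambda>x. f (\<phi> x))\<rparr>) (subtopology T (kernel H Q (\<lambda>x. f (\<phi> x))))"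
      using topgroup_restrict[OF tg sg Uo] .
    moreover have "locally_compact_space (subtopology T (kernel H Q (\<lambda>x. f (\<phi> x))))"
      using hd lc Uo by (intro locally_compact_space_open_subset) auto
    moreover have "Hausdorff_space (subtopology T (kernel H Q (\<lambda>x. f (\<phi> x))))"
      using hd by (rule Hausdorff_space_subtopology)
    ultimately show "openin (subtopology T (kernel H Q (\<lambda>x. f (\<phi> x)))) (kernel (H\<lparr>carrier := kernel H Q (\<lambda>x. f (\<phi> x))\<rparr>) K \<psi>)"
      using sK unfolding lcH_slender_def by blast
  qed
qed



lemma cmod_sq: "(cmod z)^2 = (Re z)^2 + (Im z)^2"
  by (simp add: cmod_power2)

lemma circ_iff:
  assumes n: "n \<ge> 1"
  shows "z \<in> HE_circle n \<longleftrightarrow> real n * (cmod z)^2 = 2 * Im z"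
proof -
  have np: "real n > 0" using n by simp
  have "z \<in> HE_circle n \<longleftrightarrow> cmod (\<i> * complex_of_real (1 / real n) - z) = 1 / real n"
    unfolding HE_circle_def by (simp add: dist_norm)
  also have "\<dots> \<longleftrightarrow> (cmod (\<i> * complex_of_real (1 / real n) - z))^2 = (1 / real n)^2"
    using np by (smt (verit) norm_ge_zero power2_eq_imp_eq zero_le_divide_1_iff)
  also have "(cmod (\<i> * complex_of_real (1 / real n) - z))^2 = (Re z)^2 + (1/real n - Im z)^2"
    by (simp add: cmod_sq power2_commute)
  also have "(Re z)^2 + (1/real n - Im z)^2 = (1 / real n)^2 \<longleftrightarrow> real n * ((Re z)^2 + (Im z)^2) = 2 * Im z"
  proof -
    have e: "(Re z)^2 + (1/real n - Im z)^2 - (1 / real n)^2 = ((Re z)^2 + (Im z)^2) - 2*Im z/real n"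
      using np by (simp add: power2_eq_square field_simps)
    have "((Re z)^2 + (Im z)^2) - 2*Im z/real n = 0 \<longleftrightarrow> real n * ((Re z)^2 + (Im z)^2) = 2 * Im z"
      using np by (simp add: field_simps)
    then show ?thesis using e by linarith
  qed
  finally show ?thesis by (simp add: cmod_sq)
qed

lemma HE_iff: "z \<in> HE \<longleftrightarrow> (\<exists>n\<ge>1. real n * (cmod z)^2 = 2 * Im z)"
  unfolding HE_def using circ_iff by auto

lemma circle_sub_HE: "n \<ge> 1 \<Longrightarrow> HE_circle n \<subseteq> HE"
  unfolding HE_def by auto

lemma zero_circ: "n \<ge> 1 \<Longrightarrow> 0 \<in> HE_circle n"
  by (simp add: circ_iff)

lemma zero_HE: "0 \<in> HE"
  by (simp add: HE_iff) (rule exI[of _ 1], simp)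

lemma HE_Im_pos: assumes "z \<in> HE" "z \<noteq> 0" shows "Im z > 0"
proof -
  obtain n where n: "n \<ge> 1" "real n * (cmod z)^2 = 2 * Im z" using assms HE_iff by auto
  have "real n * (cmod z)^2 > 0" using n(1) assms(2) by simp
  then show ?thesis using n by simp
qed

lemma HE_Im_nonneg: assumes "z \<in> HE" shows "Im z \<ge> 0"
  using HE_Im_pos[OF assms] by (cases "z = 0") auto

definition nu :: "complex \<Rightarrow> real" where
  "nu z = 2 * Im z / (cmod z)^2"

lemma nu_circ: "n \<ge> 1 \<Longrightarrow> z \<in> HE_circle n \<Longrightarrow> z \<noteq> 0 \<Longrightarrow> nu z = real n"
  unfolding nu_def by (simp add: circ_iff field_simps)

lemma circ_unique: "n \<ge> 1 \<Longrightarrow> m \<ge> 1 \<Longrightarrow> z \<in> HE_circle n \<Longrightarrow> z \<in> HE_circle m \<Longrightarrow> z \<noteq> 0 \<Longrightarrow> n = m"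
proof -
  assume a: "n \<ge> 1" "m \<ge> 1" "z \<in> HE_circle n" "z \<in> HE_circle m" "z \<noteq> 0"
  have "real n = real m" using nu_circ[of n z] nu_circ[of m z] a by simp
  then show "n = m" by simp
qed

lemma HE_circ_obtain: assumes "z \<in> HE" obtains n where "n \<ge> 1" "z \<in> HE_circle n"
  using assms unfolding HE_def by auto

definition tailS :: "nat \<Rightarrow> complex set" where
  "tailS M = {z \<in> HE. real (M+1) * (cmod z)^2 \<le> 2 * Im z}"

lemma tailS_sub: "tailS M \<subseteq> HE" unfolding tailS_def by auto

lemma zero_tailS: "0 \<in> tailS M" unfolding tailS_def using zero_HE by simp

lemma tailS_circ:
  assumes n: "n \<ge> 1" and z: "z \<in> HE_circle n"
  shows "z \<in> tailS M \<longleftrightarrow> z = 0 \<or> M < n"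
proof -
  have zH: "z \<in> HE" using circle_sub_HE[OF n] z by auto
  have e: "real n * (cmod z)^2 = 2 * Im z" using z circ_iff[OF n] by simp
  show ?thesis
  proof (cases "z = 0")
    case True then show ?thesis by (simp add: zero_tailS)
  next
    case False
    then have p: "(cmod z)^2 > 0" by simp
    have "real (M+1) * (cmod z)^2 \<le> real n * (cmod z)^2 \<longleftrightarrow> real (M+1) \<le> real n"
      using p by simp
    then show ?thesis unfolding tailS_def using zH e False by auto
  qed
qed

lemma tailS_mono: "M \<le> M' \<Longrightarrow> tailS M' \<subseteq> tailS M"
proof
  fix z assume "M \<le> M'" "z \<in> tailS M'"
  then have "real (M+1) * (cmod z)^2 \<le> real (M'+1) * (cmod z)^2"
    by (intro mult_right_mono) auto
  then show "z \<in> tailS M" using \<open>z \<in> tailS M'\<close> unfolding tailS_def by auto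
qed

definition finS :: "nat \<Rightarrow> complex set" where
  "finS M = (\<Union>n\<in>{1..M}. HE_circle n)"

lemma retract_eq:
  assumes z: "z \<in> HE"
  shows "HE_retract M z = (if z \<in> tailS M then 0 else z)"
proof (cases "z = 0")
  case True then show ?thesis by (simp add: HE_retract_def)
next
  case False
  obtain n where n: "n \<ge> 1" "z \<in> HE_circle n" using HE_circ_obtain[OF z] by blast
  have "z \<in> (\<Union>n\<in>{1..M}. HE_circle n) \<longleftrightarrow> n \<le> M"
  proof
    assume "z \<in> (\<Union>n\<in>{1..M}. HE_circle n)"
    then obtain k where k: "k \<in> {1..M}" "z \<in> HE_circle k" by blast
    then have "k = n" using circ_unique[of k n z] n False by auto
    then show "n \<le> M" using k by auto
  next
    assume "n \<le> M" then show "z \<in> (\<Union>n\<in>{1..M}. HE_circle n)" using n by auto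
  qed
  moreover have "z \<in> tailS M \<longleftrightarrow> M < n" using tailS_circ[OF n] False by simp
  ultimately show ?thesis unfolding HE_retract_def by auto
qed

lemma retract_in_HE: "z \<in> HE \<Longrightarrow> HE_retract M z \<in> HE"
  using retract_eq zero_HE by auto

lemma retract_zero: "HE_retract M 0 = 0"
  by (simp add: HE_retract_def)

lemma retract_cont: "continuous_on HE (HE_retract M)"
proof -
  let ?A = "{z::complex. real (M+1) * (cmod z)^2 \<le> 2 * Im z}"
  let ?B = "{z::complex. 2 * Im z \<le> real M * (cmod z)^2}"
  have cA: "closed ?A" by (intro closed_Collect_le continuous_intros)
  have cB: "closed ?B" by (intro closed_Collect_le continuous_intros)
  have c: "continuous_on (?A \<union> ?B) (\<lambda>z. if z \<in> ?A then 0 else z)"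
  proof (rule continuous_on_If[OF cA cB])
    show "continuous_on ?A (\<lambda>z. 0)" "continuous_on ?B (\<lambda>z. z)" by (auto intro: continuous_intros)
    show "0 = x" if "x \<in> ?B" "x \<in> ?A" for x
    proof -
      have "real (M+1) * (cmod x)^2 \<le> real M * (cmod x)^2" using that by auto
      then have "(cmod x)^2 \<le> 0" by (simp add: algebra_simps)
      then show ?thesis by simp
    qed
  qed auto
  have sub: "HE \<subseteq> ?A \<union> ?B"
  proof
    fix z assume z: "z \<in> HE"
    obtain n where n: "n \<ge> 1" "real n * (cmod z)^2 = 2 * Im z" using z HE_iff by auto
    show "z \<in> ?A \<union> ?B"
    proof (cases "M < n")
      case True
      then have "real (M+1) * (cmod z)^2 \<le> real n * (cmod z)^2" by (intro mult_right_mono) auto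
      then show ?thesis using n by auto
    next
      case False
      then have "real n * (cmod z)^2 \<le> real M * (cmod z)^2" by (intro mult_right_mono) auto
      then show ?thesis using n by auto
    qed
  qed
  show ?thesis
  proof (rule continuous_on_eq[OF continuous_on_subset[OF c sub]])
    fix z assume "z \<in> HE" then show "(if z \<in> ?A then 0 else z) = HE_retract M z"
      using retract_eq[of z M] unfolding tailS_def by auto
  qed
qed

definition ap :: "nat \<Rightarrow> complex" where
  "ap k = \<i> * complex_of_real (2 / real k)"

lemma norm_ap: "k \<ge> 1 \<Longrightarrow> cmod (ap k) = 2 / real k"
proof -
  have "cmod (ap k) = \<bar>2 / real k\<bar>" unfolding ap_def by (simp only: norm_mult norm_of_real norm_ii mult_1)
  then show ?thesis by simp
qed

lemma ap_circ: assumes "k \<ge> 1" "n \<ge> 1" shows "ap k \<in> HE_circle n \<longleftrightarrow> n = k"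
proof -
  have "cmod (ap k) = 2 / real k" using norm_ap assms by simp
  then have "real n * (cmod (ap k))^2 = 2 * Im (ap k) \<longleftrightarrow> real n * (4 / (real k)^2) = 4 / real k"
    unfolding ap_def by (simp add: power_divide)
  also have "\<dots> \<longleftrightarrow> real n = real k" using assms by (simp add: field_simps power2_eq_square)
  finally show ?thesis using circ_iff[OF assms(2)] by simp
qed

lemma ap_nonzero: "k \<ge> 1 \<Longrightarrow> ap k \<noteq> 0"
  unfolding ap_def by simp




lemma HE_loop_class_refl: "HE_loop g \<Longrightarrow> g \<in> HE_class g"
  unfolding HE_class_def HE_loop_def by auto

lemma HE_class_eq:
  assumes "HE_loop g" "HE_loop h" "homotopic_paths HE g h"
  shows "HE_class g = HE_class h"
proof -
  have "homotopic_paths HE g k \<longleftrightarrow> homotopic_paths HE h k" for k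
    using assms(3) homotopic_paths_sym homotopic_paths_trans by metis
  then show ?thesis unfolding HE_class_def by auto
qed

lemma HE_class_mem: "a \<in> HE_class g \<Longrightarrow> HE_loop a \<and> homotopic_paths HE g a"
  unfolding HE_class_def by auto

lemma HE_some_class:
  assumes "HE_loop g"
  shows "HE_loop (SOME a. a \<in> HE_class g) \<and> homotopic_paths HE g (SOME a. a \<in> HE_class g)"
proof -
  have "(SOME a. a \<in> HE_class g) \<in> HE_class g" using HE_loop_class_refl[OF assms] by (metis someI)
  then show ?thesis by (rule HE_class_mem)
qed

lemma HE_loop_join: "HE_loop g \<Longrightarrow> HE_loop h \<Longrightarrow> HE_loop (g +++ h)"
  unfolding HE_loop_def by (auto simp: path_image_join)

lemma HE_mult:
  assumes g: "HE_loop g" and h: "HE_loop h"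
  shows "HE_class g \<otimes>\<^bsub>HE_group\<^esub> HE_class h = HE_class (g +++ h)"
proof -
  let ?a = "SOME a. a \<in> HE_class g" and ?b = "SOME b. b \<in> HE_class h"
  have a: "HE_loop ?a" "homotopic_paths HE g ?a" using HE_some_class[OF g] by auto
  have b: "HE_loop ?b" "homotopic_paths HE h ?b" using HE_some_class[OF h] by auto
  have "homotopic_paths HE (?a +++ ?b) (g +++ h)"
    by (rule homotopic_paths_join) (use a b g in \<open>auto simp: homotopic_paths_sym HE_loop_def\<close>)
  then have "HE_class (?a +++ ?b) = HE_class (g +++ h)"
    by (intro HE_class_eq HE_loop_join a b g h)
  then show ?thesis unfolding HE_group_def by simp
qed

lemma HE_carrier: "x \<in> carrier HE_group \<longleftrightarrow> (\<exists>g. HE_loop g \<and> x = HE_class g)"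
  unfolding HE_group_def by auto

lemma HE_loop_const: "HE_loop (\<lambda>_. 0)"
  unfolding HE_loop_def by (auto simp: path_def path_image_def pathstart_def pathfinish_def zero_HE)

lemma HE_one: "one HE_group = HE_class (\<lambda>_. 0)"
  unfolding HE_group_def by simp

lemma HE_loop_retract: "HE_loop g \<Longrightarrow> HE_loop (HE_retract M \<circ> g)"
  unfolding HE_loop_def
proof (elim conjE, intro conjI)
  assume p: "path g" and i: "path_image g \<subseteq> HE" and "pathstart g = 0" "pathfinish g = 0"
  show "path (HE_retract M \<circ> g)"
    by (rule path_continuous_image[OF p continuous_on_subset[OF retract_cont i]])
  show "path_image (HE_retract M \<circ> g) \<subseteq> HE" using i retract_in_HE by (auto simp: path_image_compose)
  show "pathstart (HE_retract M \<circ> g) = 0" "pathfinish (HE_retract M \<circ> g) = 0"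
    using \<open>pathstart g = 0\<close> \<open>pathfinish g = 0\<close> retract_zero by (auto simp: pathstart_compose pathfinish_compose)
qed

lemma HE_proj_class:
  assumes g: "HE_loop g"
  shows "HE_proj M (HE_class g) = HE_class (HE_retract M \<circ> g)"
proof -
  let ?a = "SOME a. a \<in> HE_class g"
  have a: "HE_loop ?a" "homotopic_paths HE g ?a" using HE_some_class[OF g] by auto
  have "homotopic_paths HE (HE_retract M \<circ> ?a) (HE_retract M \<circ> g)"
    by (rule homotopic_paths_continuous_image[OF homotopic_paths_sym[OF a(2)] retract_cont])
       (use retract_in_HE in auto)
  then show ?thesis unfolding HE_proj_def
    by (intro HE_class_eq HE_loop_retract a g)
qed

lemma HE_hom_one:
  assumes gG: "group G" and phi: "\<phi> \<in> hom HE_group G"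
  shows "\<phi> (one HE_group) = \<one>\<^bsub>G\<^esub>"
proof -
  have c: "HE_class (\<lambda>_. 0) \<in> carrier HE_group" using HE_carrier HE_loop_const by blast
  have jj: "(\<lambda>_::real. 0::complex) +++ (\<lambda>_. 0) = (\<lambda>_. 0)" unfolding joinpaths_def by auto
  have "one HE_group \<otimes>\<^bsub>HE_group\<^esub> one HE_group = one HE_group"
    unfolding HE_one using HE_mult[OF HE_loop_const HE_loop_const] jj by simp
  moreover have "\<phi> (HE_class (\<lambda>_. 0) \<otimes>\<^bsub>HE_group\<^esub> HE_class (\<lambda>_. 0)) = \<phi> (HE_class (\<lambda>_. 0)) \<otimes>\<^bsub>G\<^esub> \<phi> (HE_class (\<lambda>_. 0))"
    using phi c unfolding hom_def by blast
  ultimately have "\<phi> (one HE_group) \<otimes>\<^bsub>G\<^esub> \<phi> (one HE_group) = \<phi> (one HE_group)"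
    unfolding HE_one by simp
  moreover have "\<phi> (one HE_group) \<in> carrier G" using phi c unfolding hom_def HE_one by auto
  ultimately show ?thesis using group.l_cancel_one[OF gG, of "\<phi> (one HE_group)" "\<phi> (one HE_group)"] by simp
qed

lemma HE_proj_carrier: "x \<in> carrier HE_group \<Longrightarrow> HE_proj M x \<in> carrier HE_group"
proof -
  assume "x \<in> carrier HE_group"
  then obtain g where "HE_loop g" "x = HE_class g" using HE_carrier by blast
  then have "HE_proj M x = HE_class (HE_retract M \<circ> g)" "HE_loop (HE_retract M \<circ> g)"
    using HE_proj_class[of g M] HE_loop_retract[of g M] by simp_all
  then show ?thesis unfolding HE_carrier by blast
qed

lemma HE_proj_mult:
  assumes x: "x \<in> carrier HE_group" and y: "y \<in> carrier HE_group"
  shows "HE_proj M (x \<otimes>\<^bsub>HE_group\<^esub> y) = HE_proj M x \<otimes>\<^bsub>HE_group\<^esub> HE_proj M y"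
proof -
  obtain g where g: "HE_loop g" "x = HE_class g" using x unfolding HE_carrier by blast
  obtain h where h: "HE_loop h" "y = HE_class h" using y unfolding HE_carrier by blast
  have "HE_proj M (x \<otimes>\<^bsub>HE_group\<^esub> y) = HE_class (HE_retract M \<circ> (g +++ h))"
    unfolding g(2) h(2) HE_mult[OF g(1) h(1)] by (rule HE_proj_class[OF HE_loop_join[OF g(1) h(1)]])
  also have "\<dots> = HE_class ((HE_retract M \<circ> g) +++ (HE_retract M \<circ> h))"
    by (simp only: path_compose_join)
  also have "\<dots> = HE_proj M x \<otimes>\<^bsub>HE_group\<^esub> HE_proj M y"
    unfolding g(2) h(2) HE_proj_class[OF g(1)] HE_proj_class[OF h(1)]
    by (rule HE_mult[symmetric]) (intro HE_loop_retract g h)+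
  finally show ?thesis .
qed

lemma factor_kills_tail:
  assumes gG: "group G" and psi: "\<psi> \<in> hom HE_group G"
    and fac: "\<forall>x\<in>carrier HE_group. \<psi> x = \<psi> (HE_proj N x)"
    and g: "HE_loop g" and gt: "path_image g \<subseteq> tailS N"
  shows "\<psi> (HE_class g) = \<one>\<^bsub>G\<^esub>"
proof -
  have c: "HE_class g \<in> carrier HE_group" using HE_carrier g by blast
  have "homotopic_paths HE (HE_retract N \<circ> g) (\<lambda>_. 0)"
  proof (rule homotopic_paths_eq)
    show "path (HE_retract N \<circ> g)" "path_image (HE_retract N \<circ> g) \<subseteq> HE"
      using HE_loop_retract[OF g] unfolding HE_loop_def by auto
    show "(HE_retract N \<circ> g) t = 0" if "t \<in> {0..1}" for t
    proof -
      have "g t \<in> tailS N" using gt that unfolding path_image_def by auto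
      then show ?thesis using retract_eq[of "g t" N] tailS_sub by auto
    qed
  qed
  then have "HE_proj N (HE_class g) = one HE_group"
    unfolding HE_proj_class[OF g] HE_one by (intro HE_class_eq HE_loop_retract g HE_loop_const)
  moreover have "\<psi> (HE_class g) = \<psi> (HE_proj N (HE_class g))" using fac c by blast
  ultimately show ?thesis using HE_hom_one[OF gG psi] by simp
qed

definition sh :: "nat \<Rightarrow> complex \<Rightarrow> complex" where
  "sh N z = z * complex_of_real (2 * Im z / (2 * Im z + real N * (cmod z)^2))"

definition ush :: "nat \<Rightarrow> complex \<Rightarrow> complex" where
  "ush N z = z * complex_of_real (2 * Im z / (2 * Im z - real N * (cmod z)^2))"

lemma sh_zero [simp]: "sh N 0 = 0" unfolding sh_def by simp
lemma ush_zero [simp]: "ush N 0 = 0" unfolding ush_def by simp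

lemma scale_circ:
  assumes n: "n \<ge> 1" and m: "m \<ge> 1" and z: "z \<in> HE_circle n" and c: "c = real n / real m"
  shows "z * complex_of_real c \<in> HE_circle m"
proof -
  have e: "real n * (cmod z)^2 = 2 * Im z" using z circ_iff[OF n] by simp
  have cp: "c > 0" using c n m by simp
  have "cmod (z * complex_of_real c) = cmod z * c" using cp by (simp add: norm_mult)
  moreover have "Im (z * complex_of_real c) = Im z * c" by simp
  moreover have "real m * (cmod z * c)^2 = c * (real n * (cmod z)^2)"
    using c m by (simp add: power2_eq_square field_simps)
  ultimately show ?thesis using circ_iff[OF m] e by simp
qed

lemma circ_facts:
  assumes n: "n \<ge> 1" and z: "z \<in> HE_circle n" and z0: "z \<noteq> 0"
  shows "2 * Im z = real n * (cmod z)^2" "(cmod z)^2 > 0"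
  using circ_iff[OF n] z z0 by auto

lemma sh_eq:
  assumes n: "n \<ge> 1" and z: "z \<in> HE_circle n" and z0: "z \<noteq> 0"
  shows "sh N z = z * complex_of_real (real n / real (n + N))"
proof -
  note f = circ_facts[OF n z z0]
  have d: "2 * Im z + real N * (cmod z)^2 = real (n + N) * (cmod z)^2" unfolding f(1) by (simp add: algebra_simps)
  have "2 * Im z / (2 * Im z + real N * (cmod z)^2) = (real n * (cmod z)^2) / (real (n + N) * (cmod z)^2)"
    by (subst d) (simp only: f(1))
  also have "\<dots> = real n / real (n + N)" using f(2) by simp
  finally have "2 * Im z / (2 * Im z + real N * (cmod z)^2) = real n / real (n + N)" .
  then show ?thesis unfolding sh_def by simp
qed

lemma ush_eq:
  assumes n: "n \<ge> 1" and z: "z \<in> HE_circle n" and z0: "z \<noteq> 0" and N: "N < n"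
  shows "ush N z = z * complex_of_real (real n / real (n - N))"
proof -
  note f = circ_facts[OF n z z0]
  have "real n * (cmod z)^2 - real N * (cmod z)^2 = real (n - N) * (cmod z)^2"
    using N by (simp add: of_nat_diff algebra_simps)
  then have "2 * Im z / (2 * Im z - real N * (cmod z)^2) = real n / real (n - N)"
    unfolding f(1) using f(2) n N by (simp add: field_simps)
  then show ?thesis unfolding ush_def by simp
qed

lemma sh_circ:
  assumes n: "n \<ge> 1" and z: "z \<in> HE_circle n"
  shows "sh N z \<in> HE_circle (n + N)"
proof (cases "z = 0")
  case True then show ?thesis using zero_circ[of "n+N"] n by simp
next
  case False
  show ?thesis unfolding sh_eq[OF n z False] by (rule scale_circ[OF n _ z]) (use n in auto)
qed

lemma ush_circ:
  assumes n: "n \<ge> 1" and z: "z \<in> HE_circle n" and N: "N < n"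
  shows "ush N z \<in> HE_circle (n - N)"
proof (cases "z = 0")
  case True then show ?thesis using zero_circ[of "n-N"] N by simp
next
  case False
  show ?thesis unfolding ush_eq[OF n z False N] by (rule scale_circ[OF n _ z]) (use N in auto)
qed

lemma sh_tail: assumes z: "z \<in> tailS M" shows "sh N z \<in> tailS (M + N)"
proof -
  have zH: "z \<in> HE" using z tailS_sub by auto
  obtain n where n: "n \<ge> 1" "z \<in> HE_circle n" using HE_circ_obtain[OF zH] by blast
  have "z = 0 \<or> M < n" using tailS_circ[OF n] z by simp
  moreover have "sh N z \<in> HE_circle (n + N)" by (rule sh_circ[OF n])
  ultimately show ?thesis using tailS_circ[of "n+N" "sh N z" "M+N"] n by auto
qed

lemma HE_tailS0: "HE \<subseteq> tailS 0"
proof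
  fix z assume zH: "z \<in> HE"
  obtain n where n: "n \<ge> 1" "z \<in> HE_circle n" using HE_circ_obtain[OF zH] by blast
  then show "z \<in> tailS 0" using tailS_circ[OF n] by simp
qed

lemma sh_HE: "z \<in> HE \<Longrightarrow> sh N z \<in> tailS N"
  using sh_tail[of z 0 N] HE_tailS0 by auto

lemma ush_tail: assumes z: "z \<in> tailS (M + N)" shows "ush N z \<in> tailS M"
proof -
  have zH: "z \<in> HE" using z tailS_sub by auto
  obtain n where n: "n \<ge> 1" "z \<in> HE_circle n" using HE_circ_obtain[OF zH] by blast
  show ?thesis
  proof (cases "z = 0")
    case True then show ?thesis by (simp add: zero_tailS)
  next
    case False
    then have Mn: "M + N < n" using tailS_circ[OF n] z by simp
    have "ush N z \<in> HE_circle (n - N)" by (rule ush_circ[OF n]) (use Mn in auto)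
    then show ?thesis using tailS_circ[of "n-N" "ush N z" M] Mn by auto
  qed
qed

lemma ush_HE: "z \<in> tailS N \<Longrightarrow> ush N z \<in> HE"
  using ush_tail[of z 0 N] tailS_sub by auto

lemma sh_ush: assumes z: "z \<in> tailS N" shows "sh N (ush N z) = z"
proof -
  have zH: "z \<in> HE" using z tailS_sub by auto
  obtain n where n: "n \<ge> 1" "z \<in> HE_circle n" using HE_circ_obtain[OF zH] by blast
  show ?thesis
  proof (cases "z = 0")
    case True then show ?thesis by simp
  next
    case False
    then have Nn: "N < n" using tailS_circ[OF n] z by simp
    have w: "ush N z = z * complex_of_real (real n / real (n - N))" by (rule ush_eq[OF n False Nn])
    have wc: "ush N z \<in> HE_circle (n - N)" by (rule ush_circ[OF n Nn])
    have w0: "ush N z \<noteq> 0" unfolding w using False Nn by simp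
    have "sh N (ush N z) = ush N z * complex_of_real (real (n - N) / real (n - N + N))"
      by (rule sh_eq[OF _ wc w0]) (use Nn in auto)
    also have "\<dots> = z * (complex_of_real (real n / real (n - N)) * complex_of_real (real (n - N) / real n))"
      unfolding w using Nn by simp
    also have "\<dots> = z" using Nn n by (simp flip: of_real_mult)
    finally show ?thesis .
  qed
qed

lemma bound_cont0:
  fixes f :: "complex \<Rightarrow> complex"
  assumes f0: "f 0 = 0" and C: "C > 0" and b: "\<And>w. w \<in> S \<Longrightarrow> cmod (f w) \<le> C * cmod w"
  shows "continuous (at 0 within S) f"
  unfolding continuous_within_eps_delta
proof (intro allI impI)
  fix e :: real assume e: "e > 0"
  show "\<exists>d>0. \<forall>x'\<in>S. dist x' 0 < d \<longrightarrow> dist (f x') (f 0) < e"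
  proof (intro exI[of _ "e / C"] conjI ballI impI)
    show "e / C > 0" using e C by simp
    fix w assume w: "w \<in> S" "dist w 0 < e / C"
    have "cmod (f w) \<le> C * cmod w" by (rule b[OF w(1)])
    also have "\<dots> < C * (e / C)" using mult_strict_left_mono[of "cmod w" "e/C" C] w(2) C by (simp add: dist_norm)
    also have "\<dots> = e" using C by simp
    finally show "dist (f w) (f 0) < e" using f0 by (simp add: dist_norm)
  qed
qed

lemma sh_cont: "continuous_on HE (sh N)"
  unfolding continuous_on_eq_continuous_within
proof
  fix z assume zH: "z \<in> HE"
  show "continuous (at z within HE) (sh N)"
  proof (cases "z = 0")
    case True
    have "continuous (at 0 within HE) (sh N)"
    proof (rule bound_cont0[of _ 1])
      fix w assume wH: "w \<in> HE"
      have I: "Im w \<ge> 0" by (rule HE_Im_nonneg[OF wH])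
      have fa: "\<bar>2 * Im w / (2 * Im w + real N * (cmod w)^2)\<bar> \<le> 1"
      proof -
        have nn: "real N * (cmod w)^2 \<ge> 0" by simp
        have b: "0 \<le> 2 * Im w" "2 * Im w \<le> 2 * Im w + real N * (cmod w)^2" using I nn by auto
        have q0: "0 \<le> 2 * Im w / (2 * Im w + real N * (cmod w)^2)" using b by simp
        have q1: "2 * Im w / (2 * Im w + real N * (cmod w)^2) \<le> 1" using b by (cases "2 * Im w + real N * (cmod w)^2 = 0") (auto simp: divide_le_eq_1)
        have "\<bar>2 * Im w / (2 * Im w + real N * (cmod w)^2)\<bar> = 2 * Im w / (2 * Im w + real N * (cmod w)^2)"
          by (rule abs_of_nonneg[OF q0])
        then show ?thesis using q1 by linarith
      qed
      have "cmod (sh N w) = cmod w * \<bar>2 * Im w / (2 * Im w + real N * (cmod w)^2)\<bar>"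
        unfolding sh_def norm_mult norm_of_real by (rule refl)
      also have "\<dots> \<le> cmod w * 1" by (rule mult_left_mono[OF fa]) simp
      finally show "cmod (sh N w) \<le> 1 * cmod w" by simp
    qed auto
    then show ?thesis using True by simp
  next
    case False
    have I: "Im z > 0" by (rule HE_Im_pos[OF zH False])
    have "2 * Im z + real N * (cmod z)^2 \<noteq> 0" using I by (smt (verit) mult_nonneg_nonneg of_nat_0_le_iff zero_le_power2)
    then show ?thesis unfolding sh_def
      by (intro continuous_intros continuous_at_within_divide) (auto intro: continuous_intros)
  qed
qed

lemma ush_cont: "continuous_on (tailS N) (ush N)"
  unfolding continuous_on_eq_continuous_within
proof
  fix z assume zT: "z \<in> tailS N"
  have zH: "z \<in> HE" using zT tailS_sub by auto
  show "continuous (at z within tailS N) (ush N)"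
  proof (cases "z = 0")
    case True
    have "continuous (at 0 within tailS N) (ush N)"
    proof (rule bound_cont0[of _ "real N + 1"])
      fix w assume wT: "w \<in> tailS N"
      have wH: "w \<in> HE" using wT tailS_sub by auto
      have I: "Im w \<ge> 0" by (rule HE_Im_nonneg[OF wH])
      have tw: "real (N+1) * (cmod w)^2 \<le> 2 * Im w" using wT unfolding tailS_def by auto
      have fa: "\<bar>2 * Im w / (2 * Im w - real N * (cmod w)^2)\<bar> \<le> real N + 1"
      proof (cases "w = 0")
        case True then show ?thesis by simp
      next
        case False
        have p: "(cmod w)^2 > 0" using False by simp
        have D: "2 * Im w - real N * (cmod w)^2 \<ge> (cmod w)^2" using tw by (simp add: algebra_simps)
        have Dp: "2 * Im w - real N * (cmod w)^2 > 0" using D p by linarith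
        have "real N * ((real N + 1) * (cmod w)^2) \<le> real N * (2 * Im w)"
          using tw by (intro mult_left_mono) (auto simp: algebra_simps)
        then have "2 * Im w \<le> (real N + 1) * (2 * Im w - real N * (cmod w)^2)"
          by (simp add: algebra_simps)
        then have "2 * Im w / (2 * Im w - real N * (cmod w)^2) \<le> real N + 1"
          using Dp by (simp add: divide_le_eq)
        moreover have q0: "2 * Im w / (2 * Im w - real N * (cmod w)^2) \<ge> 0" using I Dp by simp
        moreover have "\<bar>2 * Im w / (2 * Im w - real N * (cmod w)^2)\<bar> = 2 * Im w / (2 * Im w - real N * (cmod w)^2)"
          by (rule abs_of_nonneg[OF q0])
        ultimately show ?thesis by linarith
      qed
      have "cmod (ush N w) = cmod w * \<bar>2 * Im w / (2 * Im w - real N * (cmod w)^2)\<bar>"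
        unfolding ush_def norm_mult norm_of_real by (rule refl)
      also have "\<dots> \<le> cmod w * (real N + 1)" by (rule mult_left_mono[OF fa]) simp
      finally show "cmod (ush N w) \<le> (real N + 1) * cmod w" by (simp add: mult.commute)
    qed auto
    then show ?thesis using True by simp
  next
    case False
    have p: "(cmod z)^2 > 0" using False by simp
    have tw: "real (N+1) * (cmod z)^2 \<le> 2 * Im z" using zT unfolding tailS_def by auto
    have "2 * Im z - real N * (cmod z)^2 \<ge> (cmod z)^2" using tw by (simp add: algebra_simps)
    then have "2 * Im z - real N * (cmod z)^2 \<noteq> 0" using p by linarith
    then show ?thesis unfolding ush_def
      by (intro continuous_intros continuous_at_within_divide) (auto intro: continuous_intros)
  qed
qed

lemma HE_loop_sh: assumes g: "HE_loop g"
  shows "HE_loop (sh N \<circ> g)" "path_image (sh N \<circ> g) \<subseteq> tailS N"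
proof -
  have p: "path g" and i: "path_image g \<subseteq> HE" and s: "pathstart g = 0" and f: "pathfinish g = 0"
    using g unfolding HE_loop_def by auto
  show "path_image (sh N \<circ> g) \<subseteq> tailS N" using i sh_HE by (auto simp: path_image_compose)
  then show "HE_loop (sh N \<circ> g)" unfolding HE_loop_def
    using path_continuous_image[OF p continuous_on_subset[OF sh_cont i]] s f tailS_sub
    by (auto simp: pathstart_compose pathfinish_compose)
qed

definition Sig :: "nat \<Rightarrow> (real \<Rightarrow> complex) set \<Rightarrow> (real \<Rightarrow> complex) set" where
  "Sig N x = HE_class (sh N \<circ> (SOME a. a \<in> x))"

lemma Sig_class: assumes g: "HE_loop g" shows "Sig N (HE_class g) = HE_class (sh N \<circ> g)"
proof -
  let ?a = "SOME a. a \<in> HE_class g"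
  have a: "HE_loop ?a" "homotopic_paths HE g ?a" using HE_some_class[OF g] by auto
  have "homotopic_paths HE (sh N \<circ> ?a) (sh N \<circ> g)"
    by (rule homotopic_paths_continuous_image[OF homotopic_paths_sym[OF a(2)] sh_cont])
       (use sh_HE tailS_sub in auto)
  then show ?thesis unfolding Sig_def
    by (intro HE_class_eq HE_loop_sh a g)
qed

lemma Sig_hom: "Sig N \<in> hom HE_group HE_group"
proof (rule homI)
  fix x assume "x \<in> carrier HE_group"
  then obtain g where g: "HE_loop g" "x = HE_class g" unfolding HE_carrier by blast
  show "Sig N x \<in> carrier HE_group" unfolding g(2) Sig_class[OF g(1)] HE_carrier
    using HE_loop_sh(1)[OF g(1)] by blast
next
  fix x y assume x: "x \<in> carrier HE_group" and y: "y \<in> carrier HE_group"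
  obtain g where g: "HE_loop g" "x = HE_class g" using x unfolding HE_carrier by blast
  obtain h where h: "HE_loop h" "y = HE_class h" using y unfolding HE_carrier by blast
  have "Sig N (x \<otimes>\<^bsub>HE_group\<^esub> y) = HE_class (sh N \<circ> (g +++ h))"
    unfolding g(2) h(2) HE_mult[OF g(1) h(1)] by (rule Sig_class[OF HE_loop_join[OF g(1) h(1)]])
  also have "\<dots> = HE_class ((sh N \<circ> g) +++ (sh N \<circ> h))"
    by (simp only: path_compose_join)
  also have "\<dots> = Sig N x \<otimes>\<^bsub>HE_group\<^esub> Sig N y"
    unfolding g(2) h(2) Sig_class[OF g(1)] Sig_class[OF h(1)]
    by (rule HE_mult[symmetric]) (intro HE_loop_sh g h)+
  finally show "Sig N (x \<otimes>\<^bsub>HE_group\<^esub> y) = Sig N x \<otimes>\<^bsub>HE_group\<^esub> Sig N y" .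
qed



definition cn :: "nat \<Rightarrow> complex" where "cn n = \<i> * complex_of_real (1 / real n)"

lemma circle_sphere: "HE_circle n = sphere (cn n) (1 / real n)"
  unfolding HE_circle_def cn_def ..

lemma cn_norm: "cmod (cn n) = 1 / real n"
proof -
  have "cmod (cn n) = \<bar>1 / real n\<bar>" unfolding cn_def by (simp only: norm_mult norm_of_real norm_ii mult_1)
  then show ?thesis by simp
qed

lemma cn_nz: "n \<ge> 1 \<Longrightarrow> cn n \<noteq> 0" unfolding cn_def by simp

lemma ap_cn: "ap n = 2 * cn n" unfolding ap_def cn_def by simp

definition uu :: "nat \<Rightarrow> real \<Rightarrow> complex \<Rightarrow> complex" where
  "uu n s z = complex_of_real (1 - s) * z - cn n"

definition arcn :: "nat \<Rightarrow> real \<Rightarrow> complex \<Rightarrow> complex" where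
  "arcn n s z = cn n + complex_of_real (1 / real n) * (uu n s z / complex_of_real (cmod (uu n s z)))"

lemma circ_dist: "n \<ge> 1 \<Longrightarrow> z \<in> HE_circle n \<Longrightarrow> cmod (z - cn n) = 1 / real n"
  unfolding circle_sphere by (simp add: dist_norm norm_minus_commute)

lemma arcn_zero: assumes "n \<ge> 1" shows "arcn n s 0 = 0"
proof -
  have u: "uu n s 0 = - cn n" unfolding uu_def by simp
  have "complex_of_real (1 / real n) * (- cn n / complex_of_real (1 / real n)) = - cn n"
    using assms by simp
  then show ?thesis unfolding arcn_def u using cn_norm[of n] by simp
qed

lemma arcn_s1: assumes "n \<ge> 1" shows "arcn n 1 z = 0"
proof -
  have "uu n 1 z = uu n 1 0" unfolding uu_def by simp
  then have "arcn n 1 z = arcn n 1 0" unfolding arcn_def by simp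
  then show ?thesis using arcn_zero[OF assms] by simp
qed

lemma arcn_s0: assumes n: "n \<ge> 1" and z: "z \<in> HE_circle n" shows "arcn n 0 z = z"
proof -
  have u: "uu n 0 z = z - cn n" unfolding uu_def by simp
  have "complex_of_real (1 / real n) * ((z - cn n) / complex_of_real (1 / real n)) = z - cn n"
    using n by simp
  then show ?thesis unfolding arcn_def u using circ_dist[OF n z] by simp
qed

lemma circ_imag:
  assumes n: "n \<ge> 1" and z: "z \<in> HE_circle n" and re: "Re z = 0" and im: "Im z > 0"
  shows "z = ap n"
proof -
  have e: "real n * (cmod z)^2 = 2 * Im z" using z circ_iff[OF n] by simp
  have "(cmod z)^2 = (Im z)^2" using re by (simp add: cmod_sq)
  then have "real n * (Im z * Im z) = 2 * Im z" using e by (simp add: power2_eq_square)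
  then have "real n * Im z = 2" using im by (simp add: mult.assoc[symmetric])
  then have i: "Im z = 2 / real n" using n by (simp add: field_simps)
  show ?thesis by (rule complex_eqI) (use re i in \<open>simp_all add: ap_def\<close>)
qed

lemma imag_mult:
  assumes "complex_of_real a * z = \<i> * complex_of_real b" "b > 0"
  shows "a \<noteq> 0" "Re z = 0" "Im z > 0 \<or> a < 0"
proof -
  have r: "a * Re z = 0"
  proof -
    have "Re (complex_of_real a * z) = Re (\<i> * complex_of_real b)" using assms(1) by simp
    then show ?thesis by simp
  qed
  have i: "a * Im z = b"
  proof -
    have "Im (complex_of_real a * z) = Im (\<i> * complex_of_real b)" using assms(1) by simp
    then show ?thesis by simp
  qed
  show "a \<noteq> 0" using i assms(2) by auto
  then show "Re z = 0" using r by simp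
  show "Im z > 0 \<or> a < 0"
  proof (cases "a < 0")
    case False
    then have "a * Im z > 0" using i assms(2) by simp
    then show ?thesis using False by (simp add: zero_less_mult_iff)
  qed simp
qed

lemma uu_nz:
  assumes n: "n \<ge> 1" and z: "z \<in> HE_circle n" and za: "z \<noteq> ap n" and s: "s \<in> {0..1}"
  shows "uu n s z \<noteq> 0"
proof
  assume "uu n s z = 0"
  then have e: "complex_of_real (1 - s) * z = \<i> * complex_of_real (1 / real n)" unfolding uu_def cn_def by simp
  have b: "(1 / real n) > 0" using n by simp
  note m = imag_mult[OF e b]
  have "Im z > 0" using m(3) s by auto
  then have "z = ap n" using circ_imag[OF n z m(2)] by simp
  then show False using za by simp
qed

lemma arcn_circ:
  assumes n: "n \<ge> 1" and u: "uu n s z \<noteq> 0"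
  shows "arcn n s z \<in> HE_circle n"
proof -
  let ?w = "uu n s z / complex_of_real (cmod (uu n s z))"
  have w: "cmod ?w = 1" using u by (simp add: norm_divide)
  have "arcn n s z - cn n = complex_of_real (1 / real n) * ?w" unfolding arcn_def by simp
  then have "cmod (arcn n s z - cn n) = \<bar>1 / real n\<bar> * cmod ?w" by (simp only: norm_mult norm_of_real)
  then have "cmod (arcn n s z - cn n) = 1 / real n" using w by simp
  then show ?thesis unfolding circle_sphere by (simp add: dist_norm norm_minus_commute)
qed

lemma arcn_not_ap:
  assumes n: "n \<ge> 1" and z: "z \<in> HE_circle n" and za: "z \<noteq> ap n" and s: "s \<in> {0..1}"
  shows "arcn n s z \<noteq> ap n"
proof
  assume a: "arcn n s z = ap n"
  have u: "uu n s z \<noteq> 0" by (rule uu_nz[OF n z za s])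
  let ?c = "cmod (uu n s z)"
  have cp: "?c > 0" using u by simp
  have "complex_of_real (1 / real n) * (uu n s z / complex_of_real ?c) = cn n"
    using a unfolding arcn_def ap_cn by simp
  then have "uu n s z = complex_of_real (?c * real n) * cn n"
    using cp n by (simp add: field_simps)
  also have "\<dots> = \<i> * complex_of_real ?c" unfolding cn_def using n by (simp add: field_simps)
  finally have "complex_of_real (1 - s) * z = \<i> * complex_of_real (1 / real n + ?c)"
    unfolding uu_def cn_def by (simp add: algebra_simps)
  moreover have "1 / real n + ?c > 0"
  proof -
    have "1 / real n > 0" using n by simp
    then show ?thesis using cp by linarith
  qed
  ultimately have m: "Re z = 0" "Im z > 0 \<or> 1 - s < 0" using imag_mult by blast+
  have "Im z > 0" using m(2) s by auto
  then show False using circ_imag[OF n z m(1)] za by simp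
qed

lemma arcn_cont:
  assumes n: "n \<ge> 1" and S: "S \<subseteq> HE_circle n" and na: "ap n \<notin> S"
  shows "continuous_on ({0..1} \<times> S) (\<lambda>p. arcn n (fst p) (snd p))"
proof -
  have nz: "uu n (fst p) (snd p) \<noteq> 0" if p: "p \<in> {0..1} \<times> S" for p
  proof -
    have "snd p \<in> HE_circle n" "snd p \<noteq> ap n" "fst p \<in> {0..1}" using p S na by auto
    then show ?thesis using uu_nz[OF n] by blast
  qed
  have nz': "complex_of_real (cmod (uu n (fst p) (snd p))) \<noteq> 0" if "p \<in> {0..1} \<times> S" for p
    using nz[OF that] by simp
  have cu: "continuous_on ({0..1} \<times> S) (\<lambda>p. uu n (fst p) (snd p))"
    unfolding uu_def by (intro continuous_intros)
  have cd: "continuous_on ({0..1} \<times> S) (\<lambda>p. uu n (fst p) (snd p) / complex_of_real (cmod (uu n (fst p) (snd p))))"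
    by (rule continuous_on_divide[OF cu continuous_on_of_real[OF continuous_on_norm[OF cu]]]) (use nz' in auto)
  show ?thesis unfolding arcn_def by (intro continuous_intros cd)
qed

definition idx :: "complex \<Rightarrow> nat" where
  "idx z = (SOME n. n \<ge> 1 \<and> z \<in> HE_circle n)"

lemma idx: assumes "z \<in> HE" shows "idx z \<ge> 1" "z \<in> HE_circle (idx z)"
proof -
  obtain n where "n \<ge> 1" "z \<in> HE_circle n" using HE_circ_obtain[OF assms] by blast
  then have "\<exists>n. n \<ge> 1 \<and> z \<in> HE_circle n" by blast
  then have "idx z \<ge> 1 \<and> z \<in> HE_circle (idx z)" unfolding idx_def by (rule someI_ex)
  then show "idx z \<ge> 1" "z \<in> HE_circle (idx z)" by auto
qed

lemma idx_eq: assumes "k \<ge> 1" "z \<in> HE_circle k" "z \<noteq> 0" shows "idx z = k"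
proof -
  have zH: "z \<in> HE" using assms circle_sub_HE by auto
  show ?thesis using circ_unique[OF idx(1)[OF zH] assms(1) idx(2)[OF zH] assms(2,3)] .
qed

definition Dh :: "nat \<Rightarrow> real \<Rightarrow> complex \<Rightarrow> complex" where
  "Dh M s z = (if z \<in> tailS M then z else arcn (idx z) s z)"

lemma Dh_on_circ:
  assumes k: "1 \<le> k" "k \<le> M" and z: "z \<in> HE_circle k"
  shows "Dh M s z = arcn k s z"
proof (cases "z \<in> tailS M")
  case True
  then have "z = 0" using tailS_circ[OF k(1) z] k by auto
  then show ?thesis unfolding Dh_def using arcn_zero[OF k(1)] zero_tailS by simp
next
  case False
  then have "z \<noteq> 0" using zero_tailS by auto
  then have "idx z = k" by (rule idx_eq[OF k(1) z])
  then show ?thesis unfolding Dh_def using False by simp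
qed

lemma Dh_zero [simp]: "Dh M s 0 = 0"
  unfolding Dh_def using zero_tailS by simp

lemma Dh_s0: "z \<in> HE \<Longrightarrow> Dh M 0 z = z"
  unfolding Dh_def using arcn_s0 idx by auto

lemma Dh_s1: "z \<in> HE \<Longrightarrow> Dh M 1 z \<in> tailS M"
  unfolding Dh_def using arcn_s1 idx zero_tailS by auto

lemma Dh_in_HE:
  assumes z: "z \<in> HE" and s: "s \<in> {0..1}" and av: "\<forall>k\<in>{1..M}. z \<noteq> ap k"
  shows "Dh M s z \<in> HE"
proof (cases "z \<in> tailS M")
  case True then show ?thesis unfolding Dh_def using z by simp
next
  case False
  have n: "idx z \<ge> 1" "z \<in> HE_circle (idx z)" using idx[OF z] by auto
  have z0: "z \<noteq> 0" using False zero_tailS by auto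
  have "\<not> M < idx z" using tailS_circ[OF n] False by auto
  then have "z \<noteq> ap (idx z)" using av n(1) by auto
  then have "arcn (idx z) s z \<in> HE_circle (idx z)" using arcn_circ[OF n(1) uu_nz[OF n _ s]] by blast
  then show ?thesis unfolding Dh_def using False circle_sub_HE[OF n(1)] by auto
qed

lemma Dh_cont:
  assumes M: "M \<ge> 1" and P: "P \<subseteq> HE" "compact P" and av: "\<forall>k\<in>{1..M}. ap k \<notin> P"
  shows "continuous_on ({0..1} \<times> P) (\<lambda>p. Dh M (fst p) (snd p))"
proof -
  let ?T = "{z::complex. real (M+1) * (cmod z)^2 \<le> 2 * Im z}"
  have cP: "closed P" using P(2) by (rule compact_imp_closed)
  have cT: "closed ?T" by (intro closed_Collect_le continuous_intros)
  have eqP: "{0..1::real} \<times> P = ({0..1} \<times> (P \<inter> ?T)) \<union> (\<Union>k\<in>{1..M}. {0..1} \<times> (P \<inter> HE_circle k))"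
  proof (intro equalityI subsetI)
    fix p assume p: "p \<in> {0..1} \<times> P"
    then have zH: "snd p \<in> HE" using P by auto
    obtain n where n: "n \<ge> 1" "snd p \<in> HE_circle n" using HE_circ_obtain[OF zH] by blast
    show "p \<in> ({0..1} \<times> (P \<inter> ?T)) \<union> (\<Union>k\<in>{1..M}. {0..1} \<times> (P \<inter> HE_circle k))"
    proof (cases "n \<le> M")
      case True then show ?thesis using p n by (cases p) auto
    next
      case False
      then have "snd p \<in> tailS M" using tailS_circ[OF n] by auto
      then show ?thesis using p unfolding tailS_def by (cases p) auto
    qed
  qed auto
  have c1: "continuous_on ({0..1} \<times> (P \<inter> ?T)) (\<lambda>p. Dh M (fst p) (snd p))"
  proof (rule continuous_on_eq[of _ snd])
    show "continuous_on ({0..1} \<times> (P \<inter> ?T)) snd" by (intro continuous_intros)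
    fix p :: "real \<times> complex" assume "p \<in> {0..1} \<times> (P \<inter> ?T)"
    then have "snd p \<in> tailS M" using P unfolding tailS_def by auto
    then show "snd p = Dh M (fst p) (snd p)" unfolding Dh_def by simp
  qed
  have c2: "continuous_on (\<Union>k\<in>{1..M}. {0..1} \<times> (P \<inter> HE_circle k)) (\<lambda>p. Dh M (fst p) (snd p))"
  proof (rule continuous_on_closed_Union)
    fix k assume k: "k \<in> {1..M}"
    show "closed ({0..1::real} \<times> (P \<inter> HE_circle k))"
      by (intro closed_Times closed_Int cP) (simp_all add: circle_sphere)
    have ak: "ap k \<notin> P \<inter> HE_circle k" using av k by auto
    show "continuous_on ({0..1} \<times> (P \<inter> HE_circle k)) (\<lambda>p. Dh M (fst p) (snd p))"
    proof (rule continuous_on_eq[OF arcn_cont[of k "P \<inter> HE_circle k", OF _ _ ak]])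
      fix p :: "real \<times> complex" assume "p \<in> {0..1} \<times> (P \<inter> HE_circle k)"
      then show "arcn k (fst p) (snd p) = Dh M (fst p) (snd p)" using Dh_on_circ[of k M "snd p" "fst p"] k by auto
    qed (use k in auto)
  qed simp
  have "continuous_on (({0..1} \<times> (P \<inter> ?T)) \<union> (\<Union>k\<in>{1..M}. {0..1} \<times> (P \<inter> HE_circle k))) (\<lambda>p. Dh M (fst p) (snd p))"
  proof (rule continuous_on_closed_Un[OF _ _ c1 c2])
    show "closed ({0..1::real} \<times> (P \<inter> ?T))" by (intro closed_Times closed_Int cP cT) simp
    show "closed (\<Union>k\<in>{1..M}. {0..1::real} \<times> (P \<inter> HE_circle k))"
    proof (intro closed_UN finite_atLeastAtMost ballI)
      fix k assume "k \<in> {1..M}"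
      show "closed ({0..1::real} \<times> (P \<inter> HE_circle k))"
        by (intro closed_Times closed_Int cP) (simp_all add: circle_sphere)
    qed
  qed
  then show ?thesis by (subst eqP)
qed

lemma Dh_homotopy:
  assumes M: "M \<ge> 1" and l: "HE_loop l" and av: "\<forall>k\<in>{1..M}. ap k \<notin> path_image l"
  shows "homotopic_paths HE l (\<lambda>t. Dh M 1 (l t))"
proof -
  have p: "path l" and i: "path_image l \<subseteq> HE" and s: "pathstart l = 0" and f: "pathfinish l = 0"
    using l unfolding HE_loop_def by auto
  let ?P = "path_image l"
  have cF: "continuous_on ({0..1} \<times> ?P) (\<lambda>p. Dh M (fst p) (snd p))"
    by (rule Dh_cont[OF M i compact_path_image[OF p] av])
  have cl: "continuous_on {0..1} l" using p unfolding path_def .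
  have ci: "continuous_on ({0..1} \<times> {0..1}) (\<lambda>p::real\<times>real. (fst p, l (snd p)))"
    by (intro continuous_intros continuous_on_compose2[OF cl]) auto
  have im: "(\<lambda>p::real\<times>real. (fst p, l (snd p))) ` ({0..1} \<times> {0..1}) \<subseteq> {0..1} \<times> ?P"
    unfolding path_image_def by auto
  let ?F = "\<lambda>p. Dh M (fst p) (l (snd p))"
  have A: "continuous_on ({0..1} \<times> {0..1}) ?F"
    using continuous_on_compose2[OF cF ci im] by simp
  have B: "?F p \<in> HE" if p: "p \<in> {0..1} \<times> {0..1}" for p
  proof -
    have lp: "l (snd p) \<in> ?P" using p unfolding path_image_def by auto
    show ?thesis by (rule Dh_in_HE) (use p lp i av in auto)
  qed
  have C: "Dh M 0 (l x) = l x" if x: "x \<in> {0..1}" for x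
  proof -
    have "l x \<in> HE" using i x unfolding path_image_def by auto
    then show ?thesis by (rule Dh_s0)
  qed
  have D: "l 0 = 0" "l 1 = 0" using s f unfolding pathstart_def pathfinish_def by auto
  show ?thesis unfolding homotopic_paths
    by (rule exI[of _ ?F]) (use A B C D in \<open>auto simp: pathstart_def pathfinish_def\<close>)
qed

lemma case_ii:
  assumes gG: "group G" and phi: "\<phi> \<in> hom HE_group G" and M: "M \<ge> 1"
    and kill: "\<And>g. HE_loop g \<Longrightarrow> path_image g \<subseteq> tailS M \<Longrightarrow> \<phi> (HE_class g) = \<one>\<^bsub>G\<^esub>"
    and l: "HE_loop l" and av: "\<forall>k\<in>{1..M}. ap k \<notin> path_image l"
  shows "\<phi> (HE_class l) = \<phi> (HE_proj M (HE_class l))"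
proof -
  let ?l1 = "\<lambda>t. Dh M 1 (l t)"
  have h: "homotopic_paths HE l ?l1" by (rule Dh_homotopy[OF M l av])
  have i: "path_image l \<subseteq> HE" using l unfolding HE_loop_def by auto
  have l1: "HE_loop ?l1" using l homotopic_paths_imp_path[OF h] homotopic_paths_imp_subset[OF h]
      homotopic_paths_imp_pathstart[OF h] homotopic_paths_imp_pathfinish[OF h]
    unfolding HE_loop_def by auto
  have t1: "path_image ?l1 \<subseteq> tailS M" using Dh_s1 i unfolding path_image_def by auto
  have e1: "HE_class l = HE_class ?l1" by (rule HE_class_eq[OF l l1 h])
  have v1: "\<phi> (HE_class l) = \<one>\<^bsub>G\<^esub>" using kill[OF l1 t1] e1 by simp
  have h2: "homotopic_paths HE (HE_retract M \<circ> l) (HE_retract M \<circ> ?l1)"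
    by (rule homotopic_paths_continuous_image[OF h retract_cont]) (use retract_in_HE in auto)
  have h3: "homotopic_paths HE (HE_retract M \<circ> ?l1) (\<lambda>_. 0)"
  proof (rule homotopic_paths_eq)
    show "path (HE_retract M \<circ> ?l1)" "path_image (HE_retract M \<circ> ?l1) \<subseteq> HE"
      using HE_loop_retract[OF l1] unfolding HE_loop_def by auto
    show "(HE_retract M \<circ> ?l1) t = 0" if "t \<in> {0..1}" for t
    proof -
      have "?l1 t \<in> tailS M" using t1 that unfolding path_image_def by auto
      then show ?thesis using retract_eq[of "?l1 t" M] tailS_sub by auto
    qed
  qed
  have "HE_proj M (HE_class l) = one HE_group"
    unfolding HE_proj_class[OF l] HE_one
    by (rule HE_class_eq[OF HE_loop_retract[OF l] HE_loop_const homotopic_paths_trans[OF h2 h3]])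
  then show ?thesis using v1 HE_hom_one[OF gG phi] by simp
qed

lemma case_i:
  assumes l: "HE_loop l" and k: "k \<in> {1..M}" and sub: "path_image l \<subseteq> HE_circle k"
  shows "HE_proj M (HE_class l) = HE_class l"
proof -
  have "homotopic_paths HE (HE_retract M \<circ> l) l"
  proof (rule homotopic_paths_eq)
    show "path (HE_retract M \<circ> l)" "path_image (HE_retract M \<circ> l) \<subseteq> HE"
      using HE_loop_retract[OF l] unfolding HE_loop_def by auto
    show "(HE_retract M \<circ> l) t = l t" if "t \<in> {0..1}" for t
    proof -
      have "l t \<in> HE_circle k" using sub that unfolding path_image_def by auto
      then show ?thesis unfolding HE_retract_def using k by auto
    qed
  qed
  then show ?thesis unfolding HE_proj_class[OF l] by (rule HE_class_eq[OF HE_loop_retract[OF l] l])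
qed

definition betn :: "nat \<Rightarrow> complex \<Rightarrow> real \<Rightarrow> complex" where
  "betn n z s = (if z = ap n then cn n - \<i> * complex_of_real (1 / real n) * exp (\<i> * complex_of_real (pi * s))
                 else arcn n (1 - s) z)"

definition bet :: "complex \<Rightarrow> real \<Rightarrow> complex" where
  "bet z = betn (idx z) z"

lemma betn_path:
  assumes n: "n \<ge> 1" and z: "z \<in> HE_circle n"
  shows "path (betn n z)"
proof (cases "z = ap n")
  case True
  have "continuous_on {0..1} (\<lambda>s. cn n - \<i> * complex_of_real (1 / real n) * exp (\<i> * complex_of_real (pi * s)))"
    by (intro continuous_intros)
  then show ?thesis unfolding path_def betn_def using True by simp
next
  case False
  have c: "continuous_on ({0..1} \<times> {z}) (\<lambda>p. arcn n (fst p) (snd p))"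
    by (rule arcn_cont[OF n]) (use z False in auto)
  have ci: "continuous_on {0..1} (\<lambda>s::real. (1 - s, z))" by (intro continuous_intros)
  have im: "(\<lambda>s::real. (1 - s, z)) ` {0..1} \<subseteq> {0..1} \<times> {z}" by auto
  have "continuous_on {0..1} (\<lambda>s. arcn n (1 - s) z)" using continuous_on_compose2[OF c ci im] by simp
  then show ?thesis unfolding path_def betn_def using False by simp
qed

lemma betn_start: assumes n: "n \<ge> 1" shows "betn n z 0 = 0"
  unfolding betn_def cn_def using arcn_s1[OF n] by simp

lemma betn_finish: assumes n: "n \<ge> 1" and z: "z \<in> HE_circle n" shows "betn n z 1 = z"
proof (cases "z = ap n")
  case True
  have "exp (\<i> * complex_of_real pi) = -1" by simp
  then show ?thesis unfolding betn_def using True by (simp add: ap_cn cn_def)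
next
  case False then show ?thesis unfolding betn_def using arcn_s0[OF n z] by simp
qed

lemma betn_image:
  assumes n: "n \<ge> 1" and z: "z \<in> HE_circle n"
  shows "path_image (betn n z) \<subseteq> HE_circle n"
proof
  fix w assume "w \<in> path_image (betn n z)"
  then obtain s where s: "s \<in> {0..1}" "w = betn n z s" unfolding path_image_def by auto
  show "w \<in> HE_circle n"
  proof (cases "z = ap n")
    case True
    have "cmod (w - cn n) = cmod (\<i> * complex_of_real (1 / real n) * exp (\<i> * complex_of_real (pi * s)))"
      unfolding s(2) betn_def using True by (simp add: norm_minus_commute)
    also have "\<dots> = 1 / real n" by (simp only: norm_mult norm_ii norm_of_real norm_exp_i_times) simp
    finally show ?thesis unfolding circle_sphere by (simp add: dist_norm norm_minus_commute)
  next
    case False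
    have s': "1 - s \<in> {0..1}" using s by auto
    show ?thesis unfolding s(2) betn_def using False arcn_circ[OF n uu_nz[OF n z False s']] by simp
  qed
qed

lemma betn_avoid:
  assumes n: "n \<ge> 1" and z: "z \<in> HE_circle n" and za: "z \<noteq> ap n"
  shows "ap n \<notin> path_image (betn n z)"
proof
  assume "ap n \<in> path_image (betn n z)"
  then obtain s where s: "s \<in> {0..1}" "ap n = betn n z s" unfolding path_image_def by auto
  have s': "1 - s \<in> {0..1}" using s by auto
  show False using arcn_not_ap[OF n z za s'] s(2) za unfolding betn_def by simp
qed

lemma bet_zero: "bet 0 = (\<lambda>_. 0)"
proof
  fix s
  have n: "idx 0 \<ge> 1" using idx(1)[OF zero_HE] .
  show "bet 0 s = 0" unfolding bet_def betn_def using ap_nonzero[OF n] arcn_zero[OF n] by simp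
qed

lemma bet_facts:
  assumes zH: "z \<in> HE"
  shows "path (bet z)" "pathstart (bet z) = 0" "pathfinish (bet z) = z"
proof -
  have n: "idx z \<ge> 1" "z \<in> HE_circle (idx z)" using idx[OF zH] by auto
  show "path (bet z)" unfolding bet_def by (rule betn_path[OF n])
  show "pathstart (bet z) = 0" unfolding bet_def pathstart_def by (rule betn_start[OF n(1)])
  show "pathfinish (bet z) = z" unfolding bet_def pathfinish_def by (rule betn_finish[OF n])
qed

lemma bet_image:
  assumes k: "k \<ge> 1" and z: "z \<in> HE_circle k"
  shows "path_image (bet z) \<subseteq> HE_circle k"
proof (cases "z = 0")
  case True then show ?thesis using bet_zero zero_circ[OF k] by (simp add: path_image_def)
next
  case False
  then have "idx z = k" by (rule idx_eq[OF k z])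
  then show ?thesis unfolding bet_def using betn_image[OF k z] by simp
qed

lemma bet_HE: assumes zH: "z \<in> HE" shows "path_image (bet z) \<subseteq> HE"
  using bet_image[OF idx[OF zH]] circle_sub_HE[OF idx(1)[OF zH]] by auto

lemma bet_avoid:
  assumes zH: "z \<in> HE" and k: "k \<ge> 1" and za: "z \<noteq> ap k"
  shows "ap k \<notin> path_image (bet z)"
proof (cases "z = 0")
  case True then show ?thesis using bet_zero ap_nonzero[OF k] by (simp add: path_image_def)
next
  case False
  have n: "idx z \<ge> 1" "z \<in> HE_circle (idx z)" using idx[OF zH] by auto
  have sub: "path_image (bet z) \<subseteq> HE_circle (idx z)" unfolding bet_def by (rule betn_image[OF n])
  show ?thesis
  proof (cases "z = ap (idx z)")
    case True
    then have "idx z \<noteq> k" using za by auto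
    then show ?thesis using sub ap_circ[OF k n(1)] by auto
  next
    case False
    have "ap (idx z) \<notin> path_image (bet z)" unfolding bet_def by (rule betn_avoid[OF n False])
    then show ?thesis using sub ap_circ[OF k n(1)] by auto
  qed
qed



lemma step_homotopy:
  fixes A B Q C :: "real \<Rightarrow> complex"
  assumes A: "path A" "path_image A \<subseteq> S" and B: "path B" "path_image B \<subseteq> S"
    and Q: "path Q" "path_image Q \<subseteq> S" and C: "path C" "path_image C \<subseteq> S"
    and e1: "pathfinish A = pathfinish B" and e2: "pathstart Q = pathfinish B"
    and e3: "pathfinish Q = pathfinish C"
    and hAQ: "homotopic_paths S (A +++ Q) A'"
  shows "homotopic_paths S ((A +++ reversepath B) +++ (B +++ (Q +++ reversepath C))) (A' +++ reversepath C)"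
proof -
  let ?R = "Q +++ reversepath C"
  have rB: "path (reversepath B)" "path_image (reversepath B) \<subseteq> S" using B by auto
  have rC: "path (reversepath C)" "path_image (reversepath C) \<subseteq> S" using C by auto
  have R: "path ?R" "path_image ?R \<subseteq> S" "pathstart ?R = pathfinish B"
    using Q rC e2 e3 by (auto simp: path_image_join)
  have BR: "path (B +++ ?R)" "path_image (B +++ ?R) \<subseteq> S" using B R by (auto simp: path_image_join)
  have h1: "homotopic_paths S ((A +++ reversepath B) +++ (B +++ ?R)) (A +++ (reversepath B +++ (B +++ ?R)))"
    by (rule homotopic_paths_sym, rule homotopic_paths_assoc) (use A rB BR e1 in auto)
  have h2: "homotopic_paths S (reversepath B +++ (B +++ ?R)) ?R"
  proof -
    have "homotopic_paths S (reversepath B +++ (B +++ ?R)) ((reversepath B +++ B) +++ ?R)"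
      by (rule homotopic_paths_assoc) (use rB B R in auto)
    also have "homotopic_paths S \<dots> (linepath (pathfinish B) (pathfinish B) +++ ?R)"
      by (rule homotopic_paths_join) (use homotopic_paths_linv[OF B] R in auto)
    also have "homotopic_paths S \<dots> ?R"
      by (rule homotopic_paths_lid') (use R in auto)
    finally show ?thesis .
  qed
  have h3: "homotopic_paths S (A +++ (reversepath B +++ (B +++ ?R))) (A +++ ?R)"
    by (rule homotopic_paths_join) (use A h2 e1 in auto)
  have h4: "homotopic_paths S (A +++ ?R) ((A +++ Q) +++ reversepath C)"
    by (rule homotopic_paths_assoc) (use A Q rC e1 e2 e3 in auto)
  have h5: "homotopic_paths S ((A +++ Q) +++ reversepath C) (A' +++ reversepath C)"
    by (rule homotopic_paths_join) (use hAQ rC e3 in auto)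
  show ?thesis using h1 h3 h4 h5 homotopic_paths_trans by blast
qed

definition tt :: "nat \<Rightarrow> nat \<Rightarrow> real" where "tt m j = real j / real m"

definition lpp :: "(real \<Rightarrow> complex) \<Rightarrow> nat \<Rightarrow> nat \<Rightarrow> real \<Rightarrow> complex" where
  "lpp g m j = bet (g (tt m j)) +++ (subpath (tt m j) (tt m (Suc j)) g +++ reversepath (bet (g (tt m (Suc j)))))"

definition accp :: "(real \<Rightarrow> complex) \<Rightarrow> nat \<Rightarrow> nat \<Rightarrow> real \<Rightarrow> complex" where
  "accp g m j = subpath 0 (tt m j) g +++ reversepath (bet (g (tt m j)))"

lemma tt_in: "m \<ge> 1 \<Longrightarrow> j \<le> m \<Longrightarrow> tt m j \<in> {0..1}"
  unfolding tt_def by auto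

lemma tt_le: "tt m j \<le> tt m (Suc j)"
  unfolding tt_def by (simp add: divide_right_mono)

lemma tt_diff: "m \<ge> 1 \<Longrightarrow> tt m (Suc j) - tt m j = 1 / real m"
  unfolding tt_def by (simp add: field_simps)

lemma tt_0 [simp]: "tt m 0 = 0" unfolding tt_def by simp
lemma tt_m: "m \<ge> 1 \<Longrightarrow> tt m m = 1" unfolding tt_def by simp

lemma loop_pt: "HE_loop g \<Longrightarrow> t \<in> {0..1} \<Longrightarrow> g t \<in> HE"
  unfolding HE_loop_def path_image_def by auto

lemma sub_facts:
  assumes g: "HE_loop g" and u: "u \<in> {0..1}" and v: "v \<in> {0..1}"
  shows "path (subpath u v g)" "path_image (subpath u v g) \<subseteq> HE"
  using g path_image_subpath_subset[OF u v, of g] u v unfolding HE_loop_def by auto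

lemma bet_facts2:
  assumes "z \<in> HE"
  shows "path (bet z)" "path_image (bet z) \<subseteq> HE" "pathstart (bet z) = 0" "pathfinish (bet z) = z"
  using bet_facts[OF assms] bet_HE[OF assms] by auto

lemma lpp_loop:
  assumes g: "HE_loop g" and m: "m \<ge> 1" and j: "j < m"
  shows "HE_loop (lpp g m j)"
proof -
  have a: "tt m j \<in> {0..1}" and b: "tt m (Suc j) \<in> {0..1}" using tt_in[OF m] j by auto
  note Ba = bet_facts2[OF loop_pt[OF g a]] and Bb = bet_facts2[OF loop_pt[OF g b]]
  note Q = sub_facts[OF g a b]
  show ?thesis unfolding HE_loop_def lpp_def
    using Ba Bb Q by (auto simp: path_image_join)
qed

lemma accp_loop:
  assumes g: "HE_loop g" and m: "m \<ge> 1" and j: "j \<le> m"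
  shows "HE_loop (accp g m j)"
proof -
  have a: "tt m j \<in> {0..1}" using tt_in[OF m j] .
  have z: "(0::real) \<in> {0..1}" by simp
  note Ba = bet_facts2[OF loop_pt[OF g a]]
  note A = sub_facts[OF g z a]
  have g0: "g 0 = 0" using g unfolding HE_loop_def pathstart_def by auto
  show ?thesis unfolding HE_loop_def accp_def
    using Ba A g0 by (auto simp: path_image_join)
qed

lemma accp_step:
  assumes g: "HE_loop g" and m: "m \<ge> 1" and j: "j < m"
  shows "HE_class (accp g m j) \<otimes>\<^bsub>HE_group\<^esub> HE_class (lpp g m j) = HE_class (accp g m (Suc j))"
proof -
  have a: "tt m j \<in> {0..1}" and b: "tt m (Suc j) \<in> {0..1}" using tt_in[OF m] j by auto
  have z: "(0::real) \<in> {0..1}" by simp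
  note Ba = bet_facts2[OF loop_pt[OF g a]] and Bb = bet_facts2[OF loop_pt[OF g b]]
  note Q = sub_facts[OF g a b] and A = sub_facts[OF g z a]
  have pg: "path g" "path_image g \<subseteq> HE" using g unfolding HE_loop_def by auto
  have hAQ: "homotopic_paths HE (subpath 0 (tt m j) g +++ subpath (tt m j) (tt m (Suc j)) g) (subpath 0 (tt m (Suc j)) g)"
    by (rule homotopic_join_subpaths1[OF pg z a b]) (use a tt_le in auto)
  have h: "homotopic_paths HE (accp g m j +++ lpp g m j) (accp g m (Suc j))"
    unfolding accp_def lpp_def
    by (rule step_homotopy[OF A Ba(1,2) Q Bb(1,2) _ _ _ hAQ]) (use Ba Bb in auto)
  have l1: "HE_loop (accp g m j)" using accp_loop[OF g m] j by simp
  have l2: "HE_loop (lpp g m j)" using lpp_loop[OF g m j] .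
  have l3: "HE_loop (accp g m (Suc j))" using accp_loop[OF g m] j by simp
  show ?thesis unfolding HE_mult[OF l1 l2] by (rule HE_class_eq[OF HE_loop_join[OF l1 l2] l3 h])
qed

lemma nu_idx: "z \<in> HE \<Longrightarrow> z \<noteq> 0 \<Longrightarrow> nu z = real (idx z)"
  using nu_circ[OF idx(1) idx(2)] by simp

lemma lpp_image:
  assumes g: "HE_loop g" and m: "m \<ge> 1" and j: "j < m"
  shows "path_image (lpp g m j) = path_image (bet (g (tt m j))) \<union> g ` {tt m j..tt m (Suc j)} \<union> path_image (bet (g (tt m (Suc j))))"
proof -
  have a: "tt m j \<in> {0..1}" and b: "tt m (Suc j) \<in> {0..1}" using tt_in[OF m] j by auto
  note Ba = bet_facts2[OF loop_pt[OF g a]] and Bb = bet_facts2[OF loop_pt[OF g b]]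
  show ?thesis unfolding lpp_def using Ba Bb tt_le[of m j]
    by (simp add: path_image_join path_image_subpath Un_assoc)
qed

lemma piece_dich:
  assumes g: "HE_loop g" and M: "M \<ge> 1" and m: "m \<ge> 1" and j: "j < m"
    and uc: "\<And>t t'. t \<in> {0..1} \<Longrightarrow> t' \<in> {0..1} \<Longrightarrow> \<bar>t - t'\<bar> \<le> 1 / real m \<Longrightarrow> cmod (g t - g t') < 1 / real M"
  shows "(\<exists>k\<in>{1..M}. path_image (lpp g m j) \<subseteq> HE_circle k) \<or> (\<forall>k\<in>{1..M}. ap k \<notin> path_image (lpp g m j))"
proof -
  let ?a = "tt m j" and ?b = "tt m (Suc j)"
  have a: "?a \<in> {0..1}" and b: "?b \<in> {0..1}" using tt_in[OF m] j by auto
  have ab: "?a \<le> ?b" by (rule tt_le)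
  have sub01: "{?a..?b} \<subseteq> {0..1}" using a b by auto
  have gH: "g t \<in> HE" if "t \<in> {?a..?b}" for t using loop_pt[OF g] that sub01 by auto
  note imL = lpp_image[OF g m j]
  show ?thesis
  proof (cases "\<exists>k\<in>{1..M}. \<exists>t\<in>{?a..?b}. g t = ap k")
    case True
    then obtain k t0 where k: "k \<in> {1..M}" and t0: "t0 \<in> {?a..?b}" "g t0 = ap k" by blast
    have k1: "k \<ge> 1" using k by auto
    have near: "cmod (g t - ap k) < 1 / real M" if t: "t \<in> {?a..?b}" for t
    proof -
      have "\<bar>t - t0\<bar> \<le> ?b - ?a" using t t0 by auto
      also have "\<dots> = 1 / real m" by (rule tt_diff[OF m])
      finally show ?thesis using uc[of t t0] t t0 sub01 by auto
    qed
    have nz: "g t \<noteq> 0" if t: "t \<in> {?a..?b}" for t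
    proof
      assume "g t = 0"
      then have "cmod (ap k) < 1 / real M" using near[OF t] by simp
      moreover have "cmod (ap k) = 2 / real k" by (rule norm_ap[OF k1])
      moreover have "2 / real k \<ge> 2 / real M" using k by (simp add: frac_le)
      moreover have "1 / real M < 2 / real M" using M by (simp add: divide_strict_right_mono)
      ultimately show False by linarith
    qed
    have cg: "continuous_on {?a..?b} g"
      using g sub01 unfolding HE_loop_def path_def by (blast intro: continuous_on_subset)
    have cnu: "continuous_on {?a..?b} (\<lambda>t. nu (g t))" unfolding nu_def
      by (intro continuous_intros cg) (use nz in auto)
    have "(\<lambda>t. nu (g t)) constant_on {?a..?b}"
    proof (rule continuous_discrete_range_constant[OF connected_Icc cnu])
      fix x assume x: "x \<in> {?a..?b}"
      show "\<exists>e>0. \<forall>y. y \<in> {?a..?b} \<and> nu (g y) \<noteq> nu (g x) \<longrightarrow> e \<le> norm (nu (g y) - nu (g x))"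
      proof (intro exI[of _ 1] conjI allI impI)
        fix y assume y: "y \<in> {?a..?b} \<and> nu (g y) \<noteq> nu (g x)"
        have "nu (g y) = real (idx (g y))" "nu (g x) = real (idx (g x))"
          using nu_idx gH nz x y by auto
        then show "1 \<le> norm (nu (g y) - nu (g x))" using y by auto
      qed simp
    qed
    then obtain c where c: "\<And>t. t \<in> {?a..?b} \<Longrightarrow> nu (g t) = c" unfolding constant_on_def by blast
    have ck: "c = real k"
    proof -
      have "ap k \<in> HE_circle k" using ap_circ[OF k1 k1] by simp
      then have "nu (ap k) = real k" using nu_circ[OF k1] ap_nonzero[OF k1] by simp
      then show ?thesis using c[OF t0(1)] t0(2) by simp
    qed
    have inc: "g t \<in> HE_circle k" if t: "t \<in> {?a..?b}" for t
    proof -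
      have "real (idx (g t)) = real k" using nu_idx[OF gH[OF t] nz[OF t]] c[OF t] ck by simp
      then have "idx (g t) = k" by simp
      then show ?thesis using idx(2)[OF gH[OF t]] by simp
    qed
    have "path_image (lpp g m j) \<subseteq> HE_circle k"
      unfolding imL using inc bet_image[OF k1 inc] ab by auto
    then show ?thesis using k by blast
  next
    case False
    have "ap k \<notin> path_image (lpp g m j)" if k: "k \<in> {1..M}" for k
    proof -
      have k1: "k \<ge> 1" using k by auto
      have na: "g t \<noteq> ap k" if "t \<in> {?a..?b}" for t using False k that by blast
      have "ap k \<notin> path_image (bet (g ?a))" by (rule bet_avoid[OF gH k1 na]) (use ab in auto)
      moreover have "ap k \<notin> path_image (bet (g ?b))" by (rule bet_avoid[OF gH k1 na]) (use ab in auto)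
      moreover have "ap k \<notin> g ` {?a..?b}"
      proof
        assume "ap k \<in> g ` {?a..?b}"
        then obtain t where "t \<in> {?a..?b}" "ap k = g t" by blast
        then show False using na by metis
      qed
      ultimately show ?thesis unfolding imL by auto
    qed
    then show ?thesis by blast
  qed
qed

lemma lemmaA:
  assumes gG: "group G" and phi: "\<phi> \<in> hom HE_group G" and M: "M \<ge> 1"
    and kill: "\<And>g. HE_loop g \<Longrightarrow> path_image g \<subseteq> tailS M \<Longrightarrow> \<phi> (HE_class g) = \<one>\<^bsub>G\<^esub>"
  shows "\<forall>x\<in>carrier HE_group. \<phi> x = \<phi> (HE_proj M x)"
proof
  fix x assume "x \<in> carrier HE_group"
  then obtain g where g: "HE_loop g" and xg: "x = HE_class g" unfolding HE_carrier by blast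
  have piece: "\<phi> (HE_class l) = \<phi> (HE_proj M (HE_class l))"
    if l: "HE_loop l" and d: "(\<exists>k\<in>{1..M}. path_image l \<subseteq> HE_circle k) \<or> (\<forall>k\<in>{1..M}. ap k \<notin> path_image l)" for l
  proof (cases "\<exists>k\<in>{1..M}. path_image l \<subseteq> HE_circle k")
    case True
    then obtain k where "k \<in> {1..M}" "path_image l \<subseteq> HE_circle k" by blast
    then show ?thesis using case_i[OF l] by simp
  next
    case False
    then show ?thesis using d case_ii[OF gG phi M kill l] by blast
  qed
  have pg: "path g" and g0: "g 0 = 0" and g1: "g 1 = 0"
    using g unfolding HE_loop_def pathstart_def pathfinish_def by auto
  have "uniformly_continuous_on {0..1} g"
    by (rule compact_uniformly_continuous) (use pg in \<open>auto simp: path_def\<close>)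
  moreover have "1 / real M > 0" using M by simp
  ultimately obtain d where d: "d > 0" and dd: "\<And>t t'. t \<in> {0..1} \<Longrightarrow> t' \<in> {0..1} \<Longrightarrow> dist t' t < d \<Longrightarrow> dist (g t') (g t) < 1 / real M"
    unfolding uniformly_continuous_on_def by metis
  obtain n where n: "inverse (real (Suc n)) < d" using reals_Archimedean[OF d] by blast
  define m where "m = Suc n"
  have m: "m \<ge> 1" unfolding m_def by simp
  have md: "1 / real m < d" using n unfolding m_def by (simp add: inverse_eq_divide)
  have uc: "cmod (g t - g t') < 1 / real M"
    if "t \<in> {0..1}" "t' \<in> {0..1}" "\<bar>t - t'\<bar> \<le> 1 / real m" for t t'
    using dd[of t' t] that md by (simp add: dist_norm)
  have ind: "\<phi> (HE_class (accp g m j)) = \<phi> (HE_proj M (HE_class (accp g m j)))" if "j \<le> m" for j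
    using that
  proof (induction j)
    case 0
    have "path_image (accp g m 0) \<subseteq> HE_circle 1"
    proof -
      have "accp g m 0 = (\<lambda>_. 0)"
        by (rule ext) (simp add: accp_def joinpaths_def subpath_def reversepath_def g0 bet_zero)
      then have "path_image (accp g m 0) = {0}" by (auto simp: path_image_def)
      then show ?thesis using zero_circ[of 1] by simp
    qed
    moreover have "(1::nat) \<in> {1..M}" using M by simp
    ultimately have "\<exists>k\<in>{1..M}. path_image (accp g m 0) \<subseteq> HE_circle k" by blast
    then show ?case using piece[OF accp_loop[OF g m, of 0]] by simp
  next
    case (Suc j)
    then have j: "j < m" by simp
    have l1: "HE_loop (accp g m j)" using accp_loop[OF g m] j by simp
    have l2: "HE_loop (lpp g m j)" using lpp_loop[OF g m j] .
    have c1: "HE_class (accp g m j) \<in> carrier HE_group" using l1 HE_carrier by blast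
    have c2: "HE_class (lpp g m j) \<in> carrier HE_group" using l2 HE_carrier by blast
    have IH: "\<phi> (HE_class (accp g m j)) = \<phi> (HE_proj M (HE_class (accp g m j)))" using Suc j by simp
    have P2: "\<phi> (HE_class (lpp g m j)) = \<phi> (HE_proj M (HE_class (lpp g m j)))"
      by (rule piece[OF l2 piece_dich[OF g M m j uc]])
    have hm: "\<And>a b. a \<in> carrier HE_group \<Longrightarrow> b \<in> carrier HE_group \<Longrightarrow> \<phi> (a \<otimes>\<^bsub>HE_group\<^esub> b) = \<phi> a \<otimes>\<^bsub>G\<^esub> \<phi> b"
      using phi unfolding hom_def by blast
    have "\<phi> (HE_class (accp g m (Suc j))) = \<phi> (HE_class (accp g m j) \<otimes>\<^bsub>HE_group\<^esub> HE_class (lpp g m j))"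
      using accp_step[OF g m j] by simp
    also have "\<dots> = \<phi> (HE_class (accp g m j)) \<otimes>\<^bsub>G\<^esub> \<phi> (HE_class (lpp g m j))" by (rule hm[OF c1 c2])
    also have "\<dots> = \<phi> (HE_proj M (HE_class (accp g m j))) \<otimes>\<^bsub>G\<^esub> \<phi> (HE_proj M (HE_class (lpp g m j)))"
      using IH P2 by simp
    also have "\<dots> = \<phi> (HE_proj M (HE_class (accp g m j)) \<otimes>\<^bsub>HE_group\<^esub> HE_proj M (HE_class (lpp g m j)))"
      by (rule hm[symmetric]) (intro HE_proj_carrier c1 c2)+
    also have "\<dots> = \<phi> (HE_proj M (HE_class (accp g m j) \<otimes>\<^bsub>HE_group\<^esub> HE_class (lpp g m j)))"
      using HE_proj_mult[OF c1 c2] by simp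
    also have "\<dots> = \<phi> (HE_proj M (HE_class (accp g m (Suc j))))"
      using accp_step[OF g m j] by simp
    finally show ?case .
  qed
  have "accp g m m = g +++ linepath (pathfinish g) (pathfinish g)"
    unfolding accp_def tt_m[OF m] using g1 bet_zero
    by (simp add: linepath_refl reversepath_def pathfinish_def)
  then have "homotopic_paths HE (accp g m m) g"
    using homotopic_paths_rid[of g HE] g unfolding HE_loop_def by simp
  moreover have "HE_loop (accp g m m)" using accp_loop[OF g m] by simp
  ultimately have "HE_class (accp g m m) = HE_class g" using HE_class_eq g by blast
  then show "\<phi> x = \<phi> (HE_proj M x)" using ind[of m] xg by simp
qed

lemma n_part:
  assumes se: "short_exact K G Q i f"
    and sK: "n_slender K" and sQ: "n_slender Q"
  shows "n_slender G"
  unfolding n_slender_def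
proof
  fix \<phi> assume phi: "\<phi> \<in> hom HE_group G"
  from se have gK: "group K" and gG: "group G" and gQ: "group Q" and fh: "f \<in> hom G Q"
    unfolding short_exact_def by auto
  have fphi: "(\<lambda>x. f (\<phi> x)) \<in> hom HE_group Q" using hom_comp'[OF phi fh] .
  obtain N1 where N1: "\<forall>x\<in>carrier HE_group. f (\<phi> x) = f (\<phi> (HE_proj N1 x))"
    using bspec[OF sQ[unfolded n_slender_def] fphi] by auto
  have killQ: "f (\<phi> (HE_class g)) = \<one>\<^bsub>Q\<^esub>" if "HE_loop g" "path_image g \<subseteq> tailS N1" for g
    using factor_kills_tail[OF gQ fphi N1 that] .
  let ?chi = "\<lambda>x. \<phi> (Sig N1 x)"
  have chi: "?chi \<in> hom HE_group G" using hom_comp'[OF Sig_hom phi] .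
  have kchi: "f (?chi x) = \<one>\<^bsub>Q\<^esub>" if x: "x \<in> carrier HE_group" for x
  proof -
    obtain g where g: "HE_loop g" "x = HE_class g" using x unfolding HE_carrier by blast
    show ?thesis unfolding g(2) Sig_class[OF g(1)] by (rule killQ) (use HE_loop_sh[OF g(1)] in auto)
  qed
  note L = exact_lift[OF se chi kchi]
  let ?psi = "\<lambda>x. inv_into (carrier K) i (?chi x)"
  obtain M0 where M0: "\<forall>x\<in>carrier HE_group. ?psi x = ?psi (HE_proj M0 x)"
    using bspec[OF sK[unfolded n_slender_def] L(1)] by auto
  have killK: "?psi (HE_class g) = \<one>\<^bsub>K\<^esub>" if "HE_loop g" "path_image g \<subseteq> tailS M0" for g
    using factor_kills_tail[OF gK L(1) M0 that] .
  have killG: "\<phi> (HE_class g) = \<one>\<^bsub>G\<^esub>" if g: "HE_loop g" and gt: "path_image g \<subseteq> tailS (M0 + N1)" for g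
  proof -
    have p: "path g" and i: "path_image g \<subseteq> HE" and s: "pathstart g = 0" and fi: "pathfinish g = 0"
      using g unfolding HE_loop_def by auto
    have gt1: "path_image g \<subseteq> tailS N1" using gt tailS_mono[of N1 "M0 + N1"] by auto
    let ?g' = "ush N1 \<circ> g"
    have i': "path_image ?g' \<subseteq> tailS M0" using gt ush_tail by (auto simp: path_image_compose)
    have g': "HE_loop ?g'" unfolding HE_loop_def
      using path_continuous_image[OF p continuous_on_subset[OF ush_cont gt1]] i' tailS_sub s fi
      by (auto simp: pathstart_compose pathfinish_compose)
    have "homotopic_paths HE (sh N1 \<circ> ?g') g"
    proof (rule homotopic_paths_eq)
      show "path (sh N1 \<circ> ?g')" "path_image (sh N1 \<circ> ?g') \<subseteq> HE"
        using HE_loop_sh(1)[OF g'] unfolding HE_loop_def by auto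
      show "(sh N1 \<circ> ?g') t = g t" if "t \<in> {0..1}" for t
      proof -
        have "g t \<in> tailS N1" using gt1 that unfolding path_image_def by auto
        then show ?thesis using sh_ush[of "g t" N1] by simp
      qed
    qed
    then have "HE_class (sh N1 \<circ> ?g') = HE_class g" by (intro HE_class_eq HE_loop_sh g' g)
    then have e: "Sig N1 (HE_class ?g') = HE_class g" using Sig_class[OF g'] by simp
    have c: "HE_class ?g' \<in> carrier HE_group" using g' HE_carrier by blast
    have kk: "?psi (HE_class ?g') = \<one>\<^bsub>K\<^esub>" by (rule killK[OF g' i'])
    have l3: "?psi (HE_class ?g') = \<one>\<^bsub>K\<^esub> \<longleftrightarrow> ?chi (HE_class ?g') = \<one>\<^bsub>G\<^esub>"
      by (rule L(3)) (simp_all add: c)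
    have "?chi (HE_class ?g') = \<one>\<^bsub>G\<^esub>" using kk l3 by blast
    then show ?thesis using e by simp
  qed
  have killG': "\<phi> (HE_class g) = \<one>\<^bsub>G\<^esub>" if "HE_loop g" "path_image g \<subseteq> tailS (M0 + N1 + 1)" for g
    using killG[OF that(1)] that(2) tailS_mono[of "M0 + N1" "M0 + N1 + 1"] by auto
  show "\<exists>N. \<forall>x\<in>carrier HE_group. \<phi> x = \<phi> (HE_proj N x)"
  proof
    show "\<forall>x\<in>carrier HE_group. \<phi> x = \<phi> (HE_proj (M0 + N1 + 1) x)"
      by (rule lemmaA[OF gG phi _ killG']) simp
  qed
qed

theorem lemma3p2:
  fixes K :: "('k, 'a) monoid_scheme" and G :: "('g, 'b) monoid_scheme"
    and Q :: "('q, 'c) monoid_scheme" and i :: "'k \<Rightarrow> 'g" and f :: "'g \<Rightarrow> 'q"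
  assumes "short_exact K G Q i f"
  shows "(n_slender K \<and> n_slender Q \<longrightarrow> n_slender G)
       \<and> (cm_slender TYPE('h) K \<and> cm_slender TYPE('h) Q \<longrightarrow> cm_slender TYPE('h) G)
       \<and> (lcH_slender TYPE('h) K \<and> lcH_slender TYPE('h) Q \<longrightarrow> lcH_slender TYPE('h) G)"
  using n_part[OF assms] cm_part[OF assms] lcH_part[OF assms] by blast


end
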